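(* For every $m\geq1$, the invariant subring $\mathcal{K}(m)^{\mathfrak{S}_3}$ is generated by \[ \{z(i,I)\mid 1\leq i\leq 6,\ I\subset \{1,\dots, m\},\ |I|\leq 3\}. \]
   Context: Let $J=(x+y+w,\ x^2+y^2+w^2,\ x^6+y^6+w^6)\subset\mathbb{Q}[x,y,w]$ with $x,y,w$ of degree 2, and let $\mathcal{K}(m)=\mathbb{Q}[x,y,w]/J\otimes\bigotimes_{j=1}^m\Lambda(\alpha_j,\beta_j,\gamma_j)/(\alpha_j+\beta_j+\gamma_j)$ with $\alpha_j,\beta_j,\gamma_j$ of degree 1 (this is $H^*(G_2/T\times T^m;\mathbb{Q})$ for $T$ a maximal torus of $SU(3)\subset G_2$). The symmetric group $\mathfrak{S}_3$ (the Weyl group of $SU(3)$) acts on $\mathcal{K}(m)$ by permuting $x,y,w$ and simultaneously permuting each triple $(\alpha_j,\beta_j,\gamma_j)$ in the same way. For $I=\{i_1<\dots<i_k\}$ put $\alpha_I=\alpha_{i_1}\cdots\alpha_{i_k}$ ($\alpha_\emptyset=1$), similarly $\beta_I,\gamma_I$, and for $d\ge0$ put $z(d+1,I)=x^d\alpha_I+y^d\beta_I+w^d\gamma_I$. *)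

theory Defs
  imports Complex_Main "HOL-Library.Product_Lexorder" "HOL-Combinatorics.Permutations"
begin

text \<open>
  Concrete model of the graded-commutative Q-algebra
  A(m) = Q[x_0,x_1,x_2] (x) Lambda(a_{j,k} : 1<=j<=m, k<3)
  (x_0=x, x_1=y, x_2=w; a_{j,0}=alpha_j, a_{j,1}=beta_j, a_{j,2}=gamma_j).
  A monomial is a pair (e,S): e gives the exponents of the even generators,
  S is the set of odd generators occurring; it stands for the product
  x^e * (product of the elements of S in increasing lexicographic order).
  Elements are finitely supported coefficient functions.
\<close>

type_synonym mono = "(nat \<Rightarrow> nat) \<times> (nat \<times> nat) set"
type_synonym sp = "mono \<Rightarrow> rat"

definition sp_supp :: "sp \<Rightarrow> mono set" where
  "sp_supp f = {p. f p \<noteq> 0}"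

text \<open>sign of reordering the concatenation of the sorted S and sorted T\<close>
definition mono_sign :: "(nat \<times> nat) set \<Rightarrow> (nat \<times> nat) set \<Rightarrow> rat" where
  "mono_sign S T = (-1) ^ card {(s,t). s \<in> S \<and> t \<in> T \<and> t < s}"

definition mono_times :: "mono \<Rightarrow> mono \<Rightarrow> sp" where
  "mono_times p q =
     (if snd p \<inter> snd q = {}
      then (\<lambda>r. if r = (\<lambda>k. fst p k + fst q k, snd p \<union> snd q)
                 then mono_sign (snd p) (snd q) else 0)
      else (\<lambda>r. 0))"

definition sp_mult :: "sp \<Rightarrow> sp \<Rightarrow> sp" where
  "sp_mult f g = (\<lambda>r. \<Sum>(p,q) \<in> sp_supp f \<times> sp_supp g. f p * g q * mono_times p q r)"

definition sp_add :: "sp \<Rightarrow> sp \<Rightarrow> sp" where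
  "sp_add f g = (\<lambda>r. f r + g r)"

definition sp_sub :: "sp \<Rightarrow> sp \<Rightarrow> sp" where
  "sp_sub f g = (\<lambda>r. f r - g r)"

definition sp_smult :: "rat \<Rightarrow> sp \<Rightarrow> sp" where
  "sp_smult c f = (\<lambda>r. c * f r)"

definition sp_basis :: "mono \<Rightarrow> sp" where
  "sp_basis p = (\<lambda>r. if r = p then 1 else 0)"

definition sp_one :: sp where
  "sp_one = sp_basis (\<lambda>_. 0, {})"

primrec sp_pow :: "sp \<Rightarrow> nat \<Rightarrow> sp" where
  "sp_pow f 0 = sp_one"
| "sp_pow f (Suc n) = sp_mult f (sp_pow f n)"

text \<open>even generators: evgen 0 = x, evgen 1 = y, evgen 2 = w\<close>
definition evgen :: "nat \<Rightarrow> sp" where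
  "evgen k = sp_basis (\<lambda>i. if i = k then 1 else 0, {})"

text \<open>odd generators: oddgen j 0 = alpha_j, oddgen j 1 = beta_j, oddgen j 2 = gamma_j\<close>
definition oddgen :: "nat \<Rightarrow> nat \<Rightarrow> sp" where
  "oddgen j k = sp_basis (\<lambda>_. 0, {(j,k)})"

definition Aring :: "nat \<Rightarrow> sp set" where
  "Aring m = {f. finite (sp_supp f) \<and>
      (\<forall>(e,S) \<in> sp_supp f. (\<forall>k\<ge>3. e k = 0) \<and> S \<subseteq> {1..m} \<times> {0,1,2})}"

definition psum :: "nat \<Rightarrow> sp" where
  "psum n = sp_add (sp_pow (evgen 0) n) (sp_add (sp_pow (evgen 1) n) (sp_pow (evgen 2) n))"

definition linrel :: "nat \<Rightarrow> sp" where
  "linrel j = sp_add (oddgen j 0) (sp_add (oddgen j 1) (oddgen j 2))"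

text \<open>the (two-sided) ideal of A(m) generated by J and the alpha_j+beta_j+gamma_j;
  K(m) = A(m) / Jideal m\<close>
inductive_set Jideal :: "nat \<Rightarrow> sp set" for m :: nat where
  gen_p1: "psum 1 \<in> Jideal m"
| gen_p2: "psum 2 \<in> Jideal m"
| gen_p6: "psum 6 \<in> Jideal m"
| gen_lin: "1 \<le> j \<Longrightarrow> j \<le> m \<Longrightarrow> linrel j \<in> Jideal m"
| zero: "(\<lambda>_. 0) \<in> Jideal m"
| add: "f \<in> Jideal m \<Longrightarrow> g \<in> Jideal m \<Longrightarrow> sp_add f g \<in> Jideal m"
| mult_left: "h \<in> Aring m \<Longrightarrow> f \<in> Jideal m \<Longrightarrow> sp_mult h f \<in> Jideal m"
| mult_right: "h \<in> Aring m \<Longrightarrow> f \<in> Jideal m \<Longrightarrow> sp_mult f h \<in> Jideal m"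

definition sp_prod_list :: "sp list \<Rightarrow> sp" where
  "sp_prod_list xs = foldr sp_mult xs sp_one"

text \<open>S_3 action, sigma a permutation of {0,1,2}: the algebra endomorphism with
  evgen k |-> evgen (sigma k) and oddgen j k |-> oddgen j (sigma k)\<close>
definition act_mono :: "(nat \<Rightarrow> nat) \<Rightarrow> mono \<Rightarrow> sp" where
  "act_mono \<sigma> p =
     sp_mult (sp_prod_list (map (\<lambda>k. sp_pow (evgen (\<sigma> k)) (fst p k)) [0,1,2]))
             (sp_prod_list (map (\<lambda>(j,k). oddgen j (\<sigma> k)) (sorted_list_of_set (snd p))))"

definition act :: "(nat \<Rightarrow> nat) \<Rightarrow> sp \<Rightarrow> sp" where
  "act \<sigma> f = (\<lambda>r. \<Sum>p \<in> sp_supp f. f p * act_mono \<sigma> p r)"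

text \<open>alpha_I (k=0), beta_I (k=1), gamma_I (k=2), product in increasing order of I\<close>
definition oddI :: "nat \<Rightarrow> nat set \<Rightarrow> sp" where
  "oddI k I = sp_prod_list (map (\<lambda>i. oddgen i k) (sorted_list_of_set I))"

text \<open>z(d+1,I) = x^d alpha_I + y^d beta_I + w^d gamma_I\<close>
definition zgen :: "nat \<Rightarrow> nat set \<Rightarrow> sp" where
  "zgen i I = sp_add (sp_mult (sp_pow (evgen 0) (i - 1)) (oddI 0 I))
               (sp_add (sp_mult (sp_pow (evgen 1) (i - 1)) (oddI 1 I))
                       (sp_mult (sp_pow (evgen 2) (i - 1)) (oddI 2 I)))"

inductive_set subalg :: "sp set \<Rightarrow> sp set" for G :: "sp set" where
  const: "sp_smult c sp_one \<in> subalg G"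
| gen: "g \<in> G \<Longrightarrow> g \<in> subalg G"
| add: "f \<in> subalg G \<Longrightarrow> g \<in> subalg G \<Longrightarrow> sp_add f g \<in> subalg G"
| mult: "f \<in> subalg G \<Longrightarrow> g \<in> subalg G \<Longrightarrow> sp_mult f g \<in> subalg G"

definition Zgens :: "nat \<Rightarrow> sp set" where
  "Zgens m = {zgen i I | i I. 1 \<le> i \<and> i \<le> 6 \<and> I \<subseteq> {1..m} \<and> card I \<le> 3}"

text \<open>f represents an S_3-invariant class of K(m)\<close>
definition invariant_class :: "nat \<Rightarrow> sp \<Rightarrow> bool" where
  "invariant_class m f \<longleftrightarrow>
     (\<forall>\<sigma>. \<sigma> permutes {0,1,2} \<longrightarrow> sp_sub (act \<sigma> f) f \<in> Jideal m)"

end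

theory Submission
  imports Defs
begin

definition mp :: "mono \<Rightarrow> mono \<Rightarrow> mono" where
  "mp p q = (\<lambda>k. fst p k + fst q k, snd p \<union> snd q)"

definition mc :: "mono \<Rightarrow> mono \<Rightarrow> rat" where
  "mc p q = (if snd p \<inter> snd q = {} then mono_sign (snd p) (snd q) else 0)"

lemma mono_times_eq: "mono_times p q = (\<lambda>r. if r = mp p q then mc p q else 0)"
  by (auto simp: mono_times_def mp_def mc_def fun_eq_iff)

definition invs :: "('a::linorder) set \<Rightarrow> 'a set \<Rightarrow> ('a \<times> 'a) set" where
  "invs S T = {(s,t). s \<in> S \<and> t \<in> T \<and> t < s}"

lemma mono_sign_invs: "mono_sign S T = (-1) ^ card (invs S T)"
  by (simp add: mono_sign_def invs_def)

lemma finite_invs: "finite S \<Longrightarrow> finite T \<Longrightarrow> finite (invs S T)"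
  by (rule finite_subset[of _ "S \<times> T"]) (auto simp: invs_def)

lemma invs_Un_left: "invs (S \<union> T) U = invs S U \<union> invs T U"
  by (auto simp: invs_def)
lemma invs_Un_right: "invs S (T \<union> U) = invs S T \<union> invs S U"
  by (auto simp: invs_def)

lemma mono_sign_Un_left:
  assumes "finite S" "finite T" "finite U" "S \<inter> T = {}"
  shows "mono_sign (S \<union> T) U = mono_sign S U * mono_sign T U"
proof -
  have "invs S U \<inter> invs T U = {}" using assms(4) by (auto simp: invs_def)
  then have "card (invs (S \<union> T) U) = card (invs S U) + card (invs T U)"
    unfolding invs_Un_left using assms by (simp add: card_Un_disjoint finite_invs)
  then show ?thesis by (simp add: mono_sign_invs power_add)
qed

lemma mono_sign_Un_right:
  assumes "finite S" "finite T" "finite U" "T \<inter> U = {}"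
  shows "mono_sign S (T \<union> U) = mono_sign S T * mono_sign S U"
proof -
  have "invs S T \<inter> invs S U = {}" using assms(4) by (auto simp: invs_def)
  then have "card (invs S (T \<union> U)) = card (invs S T) + card (invs S U)"
    unfolding invs_Un_right using assms by (simp add: card_Un_disjoint finite_invs)
  then show ?thesis by (simp add: mono_sign_invs power_add)
qed

lemma mono_sign_sq: "mono_sign S T * mono_sign S T = 1"
  by (simp add: mono_sign_def flip: power_mult_distrib)

lemma mono_sign_swap:
  assumes "finite S" "finite T" "S \<inter> T = {}"
  shows "mono_sign S T * mono_sign T S = (-1) ^ (card S * card T)"
proof -
  have e: "invs S T \<union> (\<lambda>(a,b). (b,a)) ` invs T S = S \<times> T"
  proof
    show "invs S T \<union> (\<lambda>(a,b). (b,a)) ` invs T S \<subseteq> S \<times> T" by (auto simp: invs_def)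
  next
    show "S \<times> T \<subseteq> invs S T \<union> (\<lambda>(a,b). (b,a)) ` invs T S"
    proof (rule subsetI)
      fix x assume "x \<in> S \<times> T"
      then obtain s t where x: "x = (s,t)" and st: "s \<in> S" "t \<in> T" by blast
      then have "s \<noteq> t" using assms(3) by auto
      then consider "t < s" | "s < t" using linorder_neqE by blast
      then show "x \<in> invs S T \<union> (\<lambda>(a,b). (b,a)) ` invs T S"
      proof cases
        case 1 then show ?thesis using st by (simp add: invs_def x)
      next
        case 2
        then have "(t,s) \<in> invs T S" using st by (simp add: invs_def)
        then show ?thesis unfolding x by (auto intro: image_eqI[where x="(t,s)"])
      qed
    qed
  qed
  have d: "invs S T \<inter> (\<lambda>(a,b). (b,a)) ` invs T S = {}"
    by (auto simp: invs_def)
  have c: "card ((\<lambda>(a,b). (b,a)) ` invs T S) = card (invs T S)"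
    by (rule card_image) (auto simp: inj_on_def)
  have "card (invs S T) + card (invs T S) = card S * card T"
    using card_Un_disjoint[OF finite_invs[OF assms(1,2)] finite_imageI[OF finite_invs[OF assms(2,1)]] d]
      e c assms by (simp add: card_cartesian_product)
  then show ?thesis by (simp add: mono_sign_invs flip: power_add)
qed

lemma mc_assoc:
  assumes "finite (snd p)" "finite (snd q)" "finite (snd s)"
  shows "mc p q * mc (mp p q) s = mc q s * mc p (mp q s)"
proof (cases "snd p \<inter> snd q = {} \<and> snd p \<inter> snd s = {} \<and> snd q \<inter> snd s = {}")
  case True
  then show ?thesis using assms
    by (simp add: mc_def mp_def Int_Un_distrib Int_Un_distrib2 mono_sign_Un_left mono_sign_Un_right)
next
  case False
  then show ?thesis by (auto simp: mc_def mp_def Int_Un_distrib Int_Un_distrib2)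
qed

lemma mp_assoc: "mp (mp p q) s = mp p (mp q s)"
  by (simp add: mp_def add.assoc Un_assoc)

lemma mp_comm: "mp p q = mp q p"
  by (simp add: mp_def add.commute Un_commute)

lemma mc_swap:
  assumes "finite (snd p)" "finite (snd q)"
  shows "mc p q = (-1) ^ (card (snd p) * card (snd q)) * mc q p"
proof (cases "snd p \<inter> snd q = {}")
  case True
  have b: "mc q p * mc q p = 1" using True by (simp add: mc_def Int_commute mono_sign_sq)
  have ab: "mc p q * mc q p = (-1) ^ (card (snd p) * card (snd q))"
    using True assms mono_sign_swap by (simp add: mc_def Int_commute)
  have "mc p q = mc p q * (mc q p * mc q p)" using b by simp
  also have "\<dots> = (mc p q * mc q p) * mc q p" by (simp only: mult.assoc)
  finally show ?thesis using ab by simp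
next
  case False
  then show ?thesis by (auto simp: mc_def Int_commute)
qed


lemma rot3: "(\<Sum>u\<in>U. \<Sum>a\<in>A. \<Sum>b\<in>B. G u a b) = (\<Sum>a\<in>A. \<Sum>b\<in>B. \<Sum>u\<in>U. (G u a b :: 'a::comm_monoid_add))"
proof -
  have "(\<Sum>u\<in>U. \<Sum>a\<in>A. \<Sum>b\<in>B. G u a b) = (\<Sum>a\<in>A. \<Sum>u\<in>U. \<Sum>b\<in>B. G u a b)" by (rule sum.swap)
  also have "\<dots> = (\<Sum>a\<in>A. \<Sum>b\<in>B. \<Sum>u\<in>U. G u a b)" by (rule sum.cong[OF refl]) (rule sum.swap)
  finally show ?thesis .
qed
lemma swap3: "(\<Sum>u\<in>U. \<Sum>s\<in>S. \<Sum>q\<in>Q. F u s q) = (\<Sum>q\<in>Q. \<Sum>s\<in>S. \<Sum>u\<in>U. (F u s q :: 'a::comm_monoid_add))"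
proof -
  have "(\<Sum>u\<in>U. \<Sum>s\<in>S. \<Sum>q\<in>Q. F u s q) = (\<Sum>s\<in>S. \<Sum>q\<in>Q. \<Sum>u\<in>U. F u s q)" by (rule rot3)
  also have "\<dots> = (\<Sum>q\<in>Q. \<Sum>s\<in>S. \<Sum>u\<in>U. F u s q)" by (rule sum.swap)
  finally show ?thesis .
qed
lemma swap4: "(\<Sum>u\<in>U. \<Sum>s\<in>S. \<Sum>q\<in>Q. \<Sum>p\<in>P. F u s q p) = (\<Sum>p\<in>P. \<Sum>q\<in>Q. \<Sum>s\<in>S. \<Sum>u\<in>U. (F u s q p :: 'a::comm_monoid_add))"
proof -
  have "(\<Sum>u\<in>U. \<Sum>s\<in>S. \<Sum>q\<in>Q. \<Sum>p\<in>P. F u s q p) = (\<Sum>u\<in>U. \<Sum>p\<in>P. \<Sum>q\<in>Q. \<Sum>s\<in>S. F u s q p)"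
    by (rule sum.cong[OF refl]) (rule swap3)
  also have "\<dots> = (\<Sum>p\<in>P. \<Sum>u\<in>U. \<Sum>q\<in>Q. \<Sum>s\<in>S. F u s q p)" by (rule sum.swap)
  also have "\<dots> = (\<Sum>p\<in>P. \<Sum>q\<in>Q. \<Sum>s\<in>S. \<Sum>u\<in>U. F u s q p)"
    by (rule sum.cong[OF refl]) (rule rot3)
  finally show ?thesis .
qed

lemma swap4b: "(\<Sum>u\<in>U. \<Sum>s\<in>S. \<Sum>p\<in>P. \<Sum>q\<in>Q. F u s p q) = (\<Sum>p\<in>P. \<Sum>q\<in>Q. \<Sum>s\<in>S. \<Sum>u\<in>U. (F u s p q :: 'a::comm_monoid_add))"
proof -
  have "(\<Sum>u\<in>U. \<Sum>s\<in>S. \<Sum>p\<in>P. \<Sum>q\<in>Q. F u s p q) = (\<Sum>u\<in>U. \<Sum>p\<in>P. \<Sum>q\<in>Q. \<Sum>s\<in>S. F u s p q)"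
    by (rule sum.cong[OF refl]) (rule rot3)
  also have "\<dots> = (\<Sum>p\<in>P. \<Sum>q\<in>Q. \<Sum>u\<in>U. \<Sum>s\<in>S. F u s p q)" by (rule rot3)
  also have "\<dots> = (\<Sum>p\<in>P. \<Sum>q\<in>Q. \<Sum>s\<in>S. \<Sum>u\<in>U. F u s p q)"
    by (intro sum.cong refl) (rule sum.swap)
  finally show ?thesis .
qed

definition fspset :: "sp set" where
  "fspset = {f. finite (sp_supp f) \<and> (\<forall>p\<in>sp_supp f. finite (snd p))}"

lemma supp_mult: "sp_supp (sp_mult f g) \<subseteq> (\<lambda>(p,q). mp p q) ` (sp_supp f \<times> sp_supp g)"
proof
  fix r assume "r \<in> sp_supp (sp_mult f g)"
  then have "(\<Sum>(p,q) \<in> sp_supp f \<times> sp_supp g. f p * g q * mono_times p q r) \<noteq> 0"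
    by (simp add: sp_supp_def sp_mult_def)
  then obtain pq where pq: "pq \<in> sp_supp f \<times> sp_supp g"
    "(case pq of (p,q) \<Rightarrow> f p * g q * mono_times p q r) \<noteq> 0"
    using sum.not_neutral_contains_not_neutral by blast
  obtain p q where "pq = (p,q)" by (cases pq)
  then show "r \<in> (\<lambda>(p,q). mp p q) ` (sp_supp f \<times> sp_supp g)"
    using pq by (auto simp: mono_times_eq split: if_splits)
qed

lemma fspset_mult: "f \<in> fspset \<Longrightarrow> g \<in> fspset \<Longrightarrow> sp_mult f g \<in> fspset"
proof -
  assume f: "f \<in> fspset" and g: "g \<in> fspset"
  have fin: "finite ((\<lambda>(p,q). mp p q) ` (sp_supp f \<times> sp_supp g))"
    using f g by (simp add: fspset_def)
  have "\<forall>r \<in> sp_supp (sp_mult f g). finite (snd r)"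
  proof
    fix r assume "r \<in> sp_supp (sp_mult f g)"
    then have "r \<in> (\<lambda>(p,q). mp p q) ` (sp_supp f \<times> sp_supp g)" using supp_mult by blast
    then obtain p q where "p \<in> sp_supp f" "q \<in> sp_supp g" "r = mp p q" by auto
    then show "finite (snd r)" using f g by (auto simp: fspset_def mp_def)
  qed
  then show ?thesis using finite_subset[OF supp_mult fin] by (simp add: fspset_def)
qed

lemma supp_add: "sp_supp (sp_add f g) \<subseteq> sp_supp f \<union> sp_supp g"
  by (auto simp: sp_supp_def sp_add_def)
lemma supp_sub: "sp_supp (sp_sub f g) \<subseteq> sp_supp f \<union> sp_supp g"
  by (auto simp: sp_supp_def sp_sub_def)

lemma fspset_add: "f \<in> fspset \<Longrightarrow> g \<in> fspset \<Longrightarrow> sp_add f g \<in> fspset"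
  using supp_add[of f g] by (auto simp: fspset_def intro: finite_subset)
lemma fspset_sub: "f \<in> fspset \<Longrightarrow> g \<in> fspset \<Longrightarrow> sp_sub f g \<in> fspset"
  using supp_sub[of f g] by (auto simp: fspset_def intro: finite_subset)
lemma fspset_uminus: "f \<in> fspset \<Longrightarrow> (\<lambda>r. - f r) \<in> fspset"
  by (auto simp: fspset_def sp_supp_def)
lemma fspset_zero: "(\<lambda>_. 0) \<in> fspset"
  by (auto simp: fspset_def sp_supp_def)
lemma supp_basis: "sp_supp (sp_basis p) = {p}"
  by (auto simp: sp_supp_def sp_basis_def)
lemma fspset_basis: "finite (snd p) \<Longrightarrow> sp_basis p \<in> fspset"
  by (auto simp: fspset_def supp_basis)
lemma fspset_one: "sp_one \<in> fspset"
  by (simp add: sp_one_def fspset_basis)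

lemma sp_mult_eq:
  assumes "finite F" "finite G" "sp_supp f \<subseteq> F" "sp_supp g \<subseteq> G"
  shows "sp_mult f g r = (\<Sum>p\<in>F. \<Sum>q\<in>G. f p * g q * mono_times p q r)"
proof -
  have "sp_mult f g r = (\<Sum>(p,q) \<in> F \<times> G. f p * g q * mono_times p q r)"
    unfolding sp_mult_def
    by (rule sum.mono_neutral_left) (use assms in \<open>auto simp: sp_supp_def\<close>)
  also have "\<dots> = (\<Sum>p\<in>F. \<Sum>q\<in>G. f p * g q * mono_times p q r)"
    by (simp add: sum.cartesian_product)
  finally show ?thesis .
qed

lemma sum_delta_mt:
  assumes "finite U" "mp p q \<in> U"
  shows "(\<Sum>u\<in>U. mono_times p q u * Y u) = mc p q * Y (mp p q)"
proof -
  have "(\<Sum>u\<in>U. mono_times p q u * Y u) = (\<Sum>u\<in>U. if u = mp p q then mc p q * Y u else 0)"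
    by (rule sum.cong) (auto simp: mono_times_eq)
  also have "\<dots> = mc p q * Y (mp p q)" using assms by (simp add: sum.delta')
  finally show ?thesis .
qed

lemma sp_mult_assoc:
  assumes f: "f \<in> fspset" and g: "g \<in> fspset" and h: "h \<in> fspset"
  shows "sp_mult (sp_mult f g) h = sp_mult f (sp_mult g h)"
proof
  fix r
  define Sf where "Sf = sp_supp f"
  define Sg where "Sg = sp_supp g"
  define Sh where "Sh = sp_supp h"
  define U where "U = (\<lambda>(p,q). mp p q) ` (Sf \<times> Sg)"
  define V where "V = (\<lambda>(p,q). mp p q) ` (Sg \<times> Sh)"
  have fin: "finite Sf" "finite Sg" "finite Sh" using f g h by (auto simp: fspset_def Sf_def Sg_def Sh_def)
  have finU: "finite U" "finite V" using fin by (auto simp: U_def V_def)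
  have sU: "sp_supp (sp_mult f g) \<subseteq> U" using supp_mult by (simp add: U_def Sf_def Sg_def)
  have sV: "sp_supp (sp_mult g h) \<subseteq> V" using supp_mult by (simp add: V_def Sh_def Sg_def)
  have fg: "\<And>u. sp_mult f g u = (\<Sum>p\<in>Sf. \<Sum>q\<in>Sg. f p * g q * mono_times p q u)"
    by (rule sp_mult_eq) (use fin in \<open>auto simp: Sf_def Sg_def\<close>)
  have gh: "\<And>v. sp_mult g h v = (\<Sum>q\<in>Sg. \<Sum>s\<in>Sh. g q * h s * mono_times q s v)"
    by (rule sp_mult_eq) (use fin in \<open>auto simp: Sh_def Sg_def\<close>)
  have "sp_mult (sp_mult f g) h r = (\<Sum>u\<in>U. \<Sum>s\<in>Sh. sp_mult f g u * h s * mono_times u s r)"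
    by (rule sp_mult_eq) (use fin finU sU in \<open>auto simp: Sh_def\<close>)
  also have "\<dots> = (\<Sum>u\<in>U. \<Sum>s\<in>Sh. \<Sum>p\<in>Sf. \<Sum>q\<in>Sg. mono_times p q u * (f p * g q * h s * mono_times u s r))"
    unfolding fg by (simp add: sum_distrib_right sum_distrib_left mult_ac)
  also have "\<dots> = (\<Sum>p\<in>Sf. \<Sum>q\<in>Sg. \<Sum>s\<in>Sh. \<Sum>u\<in>U. mono_times p q u * (f p * g q * h s * mono_times u s r))"
    by (rule swap4b)
  also have "\<dots> = (\<Sum>p\<in>Sf. \<Sum>q\<in>Sg. \<Sum>s\<in>Sh. f p * g q * h s * (mc p q * mono_times (mp p q) s r))"
    apply (intro sum.cong refl)
    apply (subst sum_delta_mt) using finU by (auto simp: U_def)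
  finally have L: "sp_mult (sp_mult f g) h r = \<dots>" .
  have "sp_mult f (sp_mult g h) r = (\<Sum>p\<in>Sf. \<Sum>v\<in>V. f p * sp_mult g h v * mono_times p v r)"
    by (rule sp_mult_eq) (use fin finU sV in \<open>auto simp: Sf_def\<close>)
  also have "\<dots> = (\<Sum>p\<in>Sf. \<Sum>v\<in>V. \<Sum>q\<in>Sg. \<Sum>s\<in>Sh. mono_times q s v * (f p * g q * h s * mono_times p v r))"
    unfolding gh by (simp add: sum_distrib_right sum_distrib_left mult_ac)
  also have "\<dots> = (\<Sum>p\<in>Sf. \<Sum>q\<in>Sg. \<Sum>s\<in>Sh. \<Sum>v\<in>V. mono_times q s v * (f p * g q * h s * mono_times p v r))"
    by (rule sum.cong[OF refl]) (rule rot3)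
  also have "\<dots> = (\<Sum>p\<in>Sf. \<Sum>q\<in>Sg. \<Sum>s\<in>Sh. f p * g q * h s * (mc q s * mono_times p (mp q s) r))"
    apply (intro sum.cong refl)
    apply (subst sum_delta_mt) using finU by (auto simp: V_def)
  finally have R: "sp_mult f (sp_mult g h) r = \<dots>" .
  have m: "mc p q * mono_times (mp p q) s r = mc q s * mono_times p (mp q s) r"
    if "p \<in> Sf" "q \<in> Sg" "s \<in> Sh" for p q s
  proof -
    have "finite (snd p)" "finite (snd q)" "finite (snd s)"
      using that f g h by (auto simp: fspset_def Sf_def Sg_def Sh_def)
    then have "mc p q * mc (mp p q) s = mc q s * mc p (mp q s)" by (rule mc_assoc)
    then show ?thesis by (simp add: mono_times_eq mp_assoc)
  qed
  show "sp_mult (sp_mult f g) h r = sp_mult f (sp_mult g h) r"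
    unfolding L R by (intro sum.cong refl) (simp add: m)
qed


lemma sp_mult_add_left:
  assumes f: "f \<in> fspset" and g: "g \<in> fspset" and h: "h \<in> fspset"
  shows "sp_mult (sp_add f g) h = sp_add (sp_mult f h) (sp_mult g h)"
proof
  fix r
  define F where "F = sp_supp f \<union> sp_supp g"
  have fin: "finite F" "finite (sp_supp h)" using f g h by (auto simp: fspset_def F_def)
  have e1: "sp_mult (sp_add f g) h r = (\<Sum>p\<in>F. \<Sum>q\<in>sp_supp h. sp_add f g p * h q * mono_times p q r)"
    by (rule sp_mult_eq) (use fin supp_add in \<open>auto simp: F_def\<close>)
  have e2: "sp_mult f h r = (\<Sum>p\<in>F. \<Sum>q\<in>sp_supp h. f p * h q * mono_times p q r)"
    by (rule sp_mult_eq) (use fin in \<open>auto simp: F_def\<close>)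
  have e3: "sp_mult g h r = (\<Sum>p\<in>F. \<Sum>q\<in>sp_supp h. g p * h q * mono_times p q r)"
    by (rule sp_mult_eq) (use fin in \<open>auto simp: F_def\<close>)
  have e4: "sp_add (sp_mult f h) (sp_mult g h) r = sp_mult f h r + sp_mult g h r" by (simp add: sp_add_def)
  show "sp_mult (sp_add f g) h r = sp_add (sp_mult f h) (sp_mult g h) r"
    unfolding e4 unfolding e1 e2 e3 by (simp add: sp_add_def sum.distrib[symmetric] algebra_simps)
qed

lemma sp_mult_add_right:
  assumes f: "f \<in> fspset" and g: "g \<in> fspset" and h: "h \<in> fspset"
  shows "sp_mult h (sp_add f g) = sp_add (sp_mult h f) (sp_mult h g)"
proof
  fix r
  define F where "F = sp_supp f \<union> sp_supp g"
  have fin: "finite F" "finite (sp_supp h)" using f g h by (auto simp: fspset_def F_def)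
  have e1: "sp_mult h (sp_add f g) r = (\<Sum>q\<in>sp_supp h. \<Sum>p\<in>F. h q * sp_add f g p * mono_times q p r)"
    by (rule sp_mult_eq) (use fin supp_add in \<open>auto simp: F_def\<close>)
  have e2: "sp_mult h f r = (\<Sum>q\<in>sp_supp h. \<Sum>p\<in>F. h q * f p * mono_times q p r)"
    by (rule sp_mult_eq) (use fin in \<open>auto simp: F_def\<close>)
  have e3: "sp_mult h g r = (\<Sum>q\<in>sp_supp h. \<Sum>p\<in>F. h q * g p * mono_times q p r)"
    by (rule sp_mult_eq) (use fin in \<open>auto simp: F_def\<close>)
  have e4: "sp_add (sp_mult h f) (sp_mult h g) r = sp_mult h f r + sp_mult h g r" by (simp add: sp_add_def)
  show "sp_mult h (sp_add f g) r = sp_add (sp_mult h f) (sp_mult h g) r"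
    unfolding e4 unfolding e1 e2 e3 by (simp add: sp_add_def sum.distrib[symmetric] algebra_simps)
qed

definition mone :: mono where "mone = (\<lambda>_. 0, {})"

lemma mp_one_left: "mp mone q = q" and mp_one_right: "mp q mone = q"
  by (auto simp: mp_def mone_def)
lemma mc_one_left: "mc mone q = 1" and mc_one_right: "mc q mone = 1"
  by (auto simp: mc_def mone_def mono_sign_def)

lemma sp_mult_one_left:
  assumes f: "f \<in> fspset"
  shows "sp_mult sp_one f = f"
proof
  fix r
  have fin: "finite (sp_supp f)" using f by (simp add: fspset_def)
  have "sp_mult sp_one f r = (\<Sum>p\<in>{mone}. \<Sum>q\<in>sp_supp f. sp_one p * f q * mono_times p q r)"
    by (rule sp_mult_eq) (use fin in \<open>auto simp: sp_one_def supp_basis mone_def\<close>)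
  also have "\<dots> = (\<Sum>q\<in>sp_supp f. if q = r then f q else 0)"
  proof -
    have a: "sp_one mone = 1" by (simp add: sp_one_def sp_basis_def mone_def)
    have b: "\<And>q. mono_times mone q r = (if r = q then 1 else 0)"
      by (simp add: mono_times_eq mp_one_left mc_one_left)
    show ?thesis by (auto simp: a b intro!: sum.cong)
  qed
  also have "\<dots> = f r" using fin by (simp add: sum.delta' sp_supp_def)
  finally show "sp_mult sp_one f r = f r" .
qed

lemma sp_mult_one_right:
  assumes f: "f \<in> fspset"
  shows "sp_mult f sp_one = f"
proof
  fix r
  have fin: "finite (sp_supp f)" using f by (simp add: fspset_def)
  have "sp_mult f sp_one r = (\<Sum>q\<in>sp_supp f. \<Sum>p\<in>{mone}. f q * sp_one p * mono_times q p r)"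
    by (rule sp_mult_eq) (use fin in \<open>auto simp: sp_one_def supp_basis mone_def\<close>)
  also have "\<dots> = (\<Sum>q\<in>sp_supp f. if q = r then f q else 0)"
  proof -
    have a: "sp_one mone = 1" by (simp add: sp_one_def sp_basis_def mone_def)
    have b: "\<And>q. mono_times q mone r = (if r = q then 1 else 0)"
      by (simp add: mono_times_eq mp_one_right mc_one_right)
    show ?thesis by (auto simp: a b intro!: sum.cong)
  qed
  also have "\<dots> = f r" using fin by (simp add: sum.delta' sp_supp_def)
  finally show "sp_mult f sp_one r = f r" .
qed

section \<open>The ring of finitely supported elements\<close>

typedef fsp = fspset morphisms rep Abs
  using fspset_zero by blast

setup_lifting type_definition_fsp

instantiation fsp :: ring_1
begin
lift_definition zero_fsp :: fsp is "\<lambda>_. 0" by (rule fspset_zero)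
lift_definition one_fsp :: fsp is sp_one by (rule fspset_one)
lift_definition plus_fsp :: "fsp \<Rightarrow> fsp \<Rightarrow> fsp" is sp_add by (rule fspset_add)
lift_definition minus_fsp :: "fsp \<Rightarrow> fsp \<Rightarrow> fsp" is sp_sub by (rule fspset_sub)
lift_definition uminus_fsp :: "fsp \<Rightarrow> fsp" is "\<lambda>f r. - f r" by (rule fspset_uminus)
lift_definition times_fsp :: "fsp \<Rightarrow> fsp \<Rightarrow> fsp" is sp_mult by (rule fspset_mult)
instance
proof
  fix a b c :: fsp
  show "a * b * c = a * (b * c)" by transfer (rule sp_mult_assoc)
  show "a + b + c = a + (b + c)" by transfer (simp add: sp_add_def add.assoc)
  show "a + b = b + a" by transfer (simp add: sp_add_def add.commute)
  show "0 + a = a" by transfer (simp add: sp_add_def)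
  show "- a + a = 0" by transfer (simp add: sp_add_def)
  show "a - b = a + - b" by transfer (simp add: sp_add_def sp_sub_def)
  show "(a + b) * c = a * c + b * c" by transfer (rule sp_mult_add_left)
  show "a * (b + c) = a * b + a * c" by transfer (rule sp_mult_add_right)
  show "1 * a = a" by transfer (rule sp_mult_one_left)
  show "a * 1 = a" by transfer (rule sp_mult_one_right)
  show "(0::fsp) \<noteq> 1"
  proof transfer
    show "(\<lambda>_. 0) \<noteq> sp_one"
    proof
      assume "(\<lambda>_. 0) = sp_one"
      then have "(0::rat) = sp_one (\<lambda>_. 0, {})" by metis
      then show False by (simp add: sp_one_def sp_basis_def)
    qed
  qed
qed
end


section \<open>Ordered products of anticommuting elements\<close>

lemma neg1_pow_central: "(-1::'a::ring_1)^n * x = x * (-1)^n"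
  by (cases "even n") simp_all

lemma sorted_insert_min:
  assumes "finite A" "\<forall>x\<in>A. a < x"
  shows "sorted_list_of_set (insert a A) = a # sorted_list_of_set A"
proof -
  have aA: "a \<notin> A" using assms(2) by blast
  have m: "Min (insert a A) = a" using assms by (auto intro!: Min_eqI)
  have "insert a A - {a} = A" using aA by blast
  then show ?thesis using sorted_list_of_set_nonempty[of "insert a A"] assms(1) m by simp
qed

lemma neg1_left_commute: "x * ((-1::'a::ring_1)^n * y) = (-1)^n * (x * y)"
proof -
  have "x * ((-1)^n * y) = (x * (-1)^n) * y" by (simp only: mult.assoc)
  also have "\<dots> = ((-1)^n * x) * y" by (simp only: neg1_pow_central)
  finally show ?thesis by (simp only: mult.assoc)
qed

definition OP :: "('b::linorder \<Rightarrow> 'a::ring_1) \<Rightarrow> 'b set \<Rightarrow> 'a" where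
  "OP \<theta> S = prod_list (map \<theta> (sorted_list_of_set S))"

lemma OP_empty[simp]: "OP \<theta> {} = 1" by (simp add: OP_def)

lemma OP_insert_min:
  assumes "finite A" "\<forall>x\<in>A. a < x"
  shows "OP \<theta> (insert a A) = \<theta> a * OP \<theta> A"
  using sorted_insert_min[OF assms] by (simp add: OP_def)

locale anticomm =
  fixes \<theta> :: "'b::linorder \<Rightarrow> 'a::ring_1"
  assumes anti: "x \<noteq> y \<Longrightarrow> \<theta> x * \<theta> y = - (\<theta> y * \<theta> x)"
    and sq: "\<theta> x * \<theta> x = 0"
begin

lemma OP_ins:
  assumes "finite U"
  shows "\<theta> a * OP \<theta> U = (if a \<in> U then 0 else (-1)^card {u\<in>U. u < a} * OP \<theta> (insert a U))"
  using assms
proof (induction U rule: finite_linorder_min_induct)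
  case empty
  then show ?case using OP_insert_min[of "{}" a \<theta>] by simp
next
  case (insert b A)
  have Ob: "OP \<theta> (insert b A) = \<theta> b * OP \<theta> A" using OP_insert_min insert by blast
  consider "a = b" | "a < b" | "b < a" by fastforce
  then show ?case
  proof cases
    case 1
    then show ?thesis using Ob by (simp add: sq flip: mult.assoc)
  next
    case 2
    then have "\<forall>x\<in>insert b A. a < x" using insert by auto
    then have "OP \<theta> (insert a (insert b A)) = \<theta> a * OP \<theta> (insert b A)"
      using OP_insert_min insert by (metis finite_insert)
    moreover have "card {u \<in> insert b A. u < a} = 0" using 2 insert by auto
    moreover have "a \<notin> insert b A" using 2 insert by auto
    ultimately show ?thesis by (simp only: if_False power_0 mult_1)
  next
    case 3
    have "\<theta> a * OP \<theta> (insert b A) = (\<theta> a * \<theta> b) * OP \<theta> A" by (simp add: Ob mult.assoc)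
    also have "\<dots> = - (\<theta> b * \<theta> a) * OP \<theta> A" using anti[of a b] 3 by simp
    also have "\<dots> = - (\<theta> b * (\<theta> a * OP \<theta> A))" by (simp add: mult.assoc)
    finally have ab: "\<theta> a * OP \<theta> (insert b A) = - (\<theta> b * (\<theta> a * OP \<theta> A))" .
    show ?thesis
    proof (cases "a \<in> A")
      case True
      then show ?thesis using ab insert.IH by simp
    next
      case False
      have ba: "\<forall>x\<in>insert a A. b < x" using 3 insert by auto
      have c: "{u \<in> insert b A. u < a} = insert b {u \<in> A. u < a}" using 3 by auto
      have bn: "b \<notin> {u \<in> A. u < a}" using insert by auto
      have cc: "card {u \<in> insert b A. u < a} = Suc (card {u \<in> A. u < a})"
        unfolding c using bn insert by simp
      have "\<theta> a * OP \<theta> (insert b A) = - (\<theta> b * ((-1)^card {u\<in>A. u < a} * OP \<theta> (insert a A)))"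
        using ab insert.IH False by simp
      also have "\<dots> = - ((-1)^card {u\<in>A. u < a} * (\<theta> b * OP \<theta> (insert a A)))"
        by (simp only: neg1_left_commute)
      also have "\<theta> b * OP \<theta> (insert a A) = OP \<theta> (insert b (insert a A))"
        using OP_insert_min[of "insert a A" b \<theta>] ba insert by simp
      also have "insert b (insert a A) = insert a (insert b A)" by blast
      finally show ?thesis using False 3 cc by (simp add: less_imp_neq[of b a, symmetric])
    qed
  qed
qed

lemma OP_mult:
  assumes "finite S" "finite T"
  shows "OP \<theta> S * OP \<theta> T = (if S \<inter> T = {} then (-1)^card (invs S T) * OP \<theta> (S \<union> T) else 0)"
  using assms
proof (induction S rule: finite_linorder_min_induct)
  case empty
  then show ?case by (simp add: invs_def)
next
  case (insert a A)
  have Oa: "OP \<theta> (insert a A) = \<theta> a * OP \<theta> A" using OP_insert_min insert by blast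
  show ?case
  proof (cases "A \<inter> T = {}")
    case False
    then show ?thesis using Oa insert by (auto simp: mult.assoc)
  next
    case AT: True
    have "OP \<theta> (insert a A) * OP \<theta> T = \<theta> a * (OP \<theta> A * OP \<theta> T)" using Oa by (simp add: mult.assoc)
    also have "\<dots> = (\<theta> a * (-1)^card (invs A T)) * OP \<theta> (A \<union> T)" using insert AT by (simp add: mult.assoc)
    also have "\<dots> = (-1)^card (invs A T) * (\<theta> a * OP \<theta> (A \<union> T))" by (simp add: neg1_pow_central mult.assoc)
    finally have e: "OP \<theta> (insert a A) * OP \<theta> T = (-1)^card (invs A T) * (\<theta> a * OP \<theta> (A \<union> T))" .
    show ?thesis
    proof (cases "a \<in> T")
      case True
      then show ?thesis using e OP_ins[of "A \<union> T" a] insert by auto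
    next
      case False
      have aA: "a \<notin> A" using insert by auto
      have c: "{u \<in> A \<union> T. u < a} = {t \<in> T. t < a}" using insert by auto
      have i: "invs (insert a A) T = invs A T \<union> (\<lambda>t. (a,t)) ` {t \<in> T. t < a}"
        by (auto simp: invs_def)
      have d: "invs A T \<inter> (\<lambda>t. (a,t)) ` {t \<in> T. t < a} = {}" using aA by (auto simp: invs_def)
      have fi: "finite (invs A T)" by (rule finite_subset[of _ "A \<times> T"]) (use insert in \<open>auto simp: invs_def\<close>)
      have ci: "card (invs (insert a A) T) = card (invs A T) + card {t \<in> T. t < a}"
        unfolding i using d fi insert by (simp add: card_Un_disjoint card_image inj_on_def)
      show ?thesis using e OP_ins[of "A \<union> T" a] insert False aA AT c ci
        by (simp add: power_add mult.assoc)
    qed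
  qed
qed

end

definition C :: "rat \<Rightarrow> fsp" where "C c = Abs (sp_smult c sp_one)"
definition B :: "mono \<Rightarrow> fsp" where "B p = Abs (sp_basis p)"
definition X :: "nat \<Rightarrow> fsp" where "X k = Abs (evgen k)"
definition og :: "nat \<Rightarrow> nat \<Rightarrow> fsp" where "og j k = Abs (oddgen j k)"

lemma fspset_smult: "f \<in> fspset \<Longrightarrow> sp_smult c f \<in> fspset"
  by (auto simp: fspset_def sp_supp_def sp_smult_def intro: finite_subset)

lemma rep_C: "rep (C c) = sp_smult c sp_one"
  by (simp add: C_def Abs_inverse fspset_smult fspset_one)

lemma rep_B: "finite (snd p) \<Longrightarrow> rep (B p) = sp_basis p"
  by (simp add: B_def Abs_inverse fspset_basis)

lemma X_B: "X k = B (\<lambda>i. if i = k then 1 else 0, {})"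
  by (simp add: X_def B_def evgen_def)

lemma og_B: "og j k = B (\<lambda>_. 0, {(j,k)})"
  by (simp add: og_def B_def oddgen_def)

lemma rep_mult: "rep (a * b) = sp_mult (rep a) (rep b)" by (rule times_fsp.rep_eq)
lemma rep_add: "rep (a + b) = sp_add (rep a) (rep b)" by (rule plus_fsp.rep_eq)
lemma rep_minus: "rep (a - b) = sp_sub (rep a) (rep b)" by (rule minus_fsp.rep_eq)
lemma rep_one: "rep 1 = sp_one" by (rule one_fsp.rep_eq)
lemma rep_zero: "rep 0 = (\<lambda>_. 0)" by (rule zero_fsp.rep_eq)
lemma rep_fspset: "rep a \<in> fspset" using rep by blast

lemma supp_smult_one: "sp_supp (sp_smult c sp_one) \<subseteq> {mone}"
  by (auto simp: sp_supp_def sp_smult_def sp_one_def sp_basis_def mone_def)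

lemma sp_mult_smult_left:
  assumes f: "f \<in> fspset"
  shows "sp_mult (sp_smult c sp_one) f = sp_smult c f"
proof
  fix r
  have fin: "finite (sp_supp f)" using f by (simp add: fspset_def)
  have "sp_mult (sp_smult c sp_one) f r = (\<Sum>p\<in>{mone}. \<Sum>q\<in>sp_supp f. sp_smult c sp_one p * f q * mono_times p q r)"
    by (rule sp_mult_eq) (use fin supp_smult_one in \<open>auto\<close>)
  also have "\<dots> = (\<Sum>q\<in>sp_supp f. if q = r then c * f q else 0)"
  proof -
    have a: "sp_smult c sp_one mone = c" by (simp add: sp_smult_def sp_one_def sp_basis_def mone_def)
    have b: "\<And>q. mono_times mone q r = (if r = q then 1 else 0)"
      by (simp add: mono_times_eq mp_one_left mc_one_left)
    show ?thesis by (auto simp: a b intro!: sum.cong)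
  qed
  also have "\<dots> = sp_smult c f r" using fin by (simp add: sum.delta' sp_supp_def sp_smult_def)
  finally show "sp_mult (sp_smult c sp_one) f r = sp_smult c f r" .
qed

lemma sp_mult_smult_right:
  assumes f: "f \<in> fspset"
  shows "sp_mult f (sp_smult c sp_one) = sp_smult c f"
proof
  fix r
  have fin: "finite (sp_supp f)" using f by (simp add: fspset_def)
  have "sp_mult f (sp_smult c sp_one) r = (\<Sum>q\<in>sp_supp f. \<Sum>p\<in>{mone}. f q * sp_smult c sp_one p * mono_times q p r)"
    by (rule sp_mult_eq) (use fin supp_smult_one in \<open>auto\<close>)
  also have "\<dots> = (\<Sum>q\<in>sp_supp f. if q = r then c * f q else 0)"
  proof -
    have a: "sp_smult c sp_one mone = c" by (simp add: sp_smult_def sp_one_def sp_basis_def mone_def)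
    have b: "\<And>q. mono_times q mone r = (if r = q then 1 else 0)"
      by (simp add: mono_times_eq mp_one_right mc_one_right)
    show ?thesis by (auto simp: a b intro!: sum.cong)
  qed
  also have "\<dots> = sp_smult c f r" using fin by (simp add: sum.delta' sp_supp_def sp_smult_def)
  finally show "sp_mult f (sp_smult c sp_one) r = sp_smult c f r" .
qed

lemma rep_C_mult: "rep (C c * a) = sp_smult c (rep a)"
  by (simp add: rep_mult rep_C sp_mult_smult_left rep_fspset)
lemma rep_mult_C: "rep (a * C c) = sp_smult c (rep a)"
  by (simp add: rep_mult rep_C sp_mult_smult_right rep_fspset)

lemma C_central: "C c * a = a * C c"
proof -
  have "rep (C c * a) = rep (a * C c)" by (simp only: rep_C_mult rep_mult_C)
  then show ?thesis by (simp only: rep_inject)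
qed

lemma C_add: "C (a + b) = C a + C b"
proof -
  have "rep (C (a + b)) = rep (C a + C b)"
    by (simp only: rep_C rep_add) (simp add: sp_add_def sp_smult_def fun_eq_iff algebra_simps)
  then show ?thesis by (simp only: rep_inject)
qed
lemma C_mult: "C (a * b) = C a * C b"
proof -
  have "rep (C (a * b)) = rep (C a * C b)"
    by (simp only: rep_C_mult rep_C) (simp add: sp_smult_def fun_eq_iff)
  then show ?thesis by (simp only: rep_inject)
qed
lemma C_one: "C 1 = 1"
proof -
  have "rep (C 1) = rep 1" by (simp only: rep_C rep_one) (simp add: sp_smult_def)
  then show ?thesis by (simp only: rep_inject)
qed
lemma C_zero: "C 0 = 0"
proof -
  have "rep (C 0) = rep 0" by (simp only: rep_C rep_zero) (simp add: sp_smult_def)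
  then show ?thesis by (simp only: rep_inject)
qed
lemma C_uminus: "C (- a) = - C a"
proof -
  have "rep (C (- a)) = rep (- C a)" by (simp only: rep_C uminus_fsp.rep_eq) (simp add: sp_smult_def)
  then show ?thesis by (simp only: rep_inject)
qed
lemma C_power: "C (a ^ n) = C a ^ n"
  by (induction n) (simp_all add: C_one C_mult)
lemma C_neg1_power: "C ((-1) ^ n) = (-1) ^ n"
  by (simp add: C_power C_uminus C_one)
lemma C_left_commute: "a * (C c * b) = C c * (a * b)"
proof -
  have "a * (C c * b) = (a * C c) * b" by (simp only: mult.assoc)
  also have "\<dots> = (C c * a) * b" by (simp only: C_central[of c a])
  finally show ?thesis by (simp only: mult.assoc)
qed
lemma C_mult_C: "C x * a * (C y * b) = C (x * y) * (a * b)"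
proof -
  have "C x * a * (C y * b) = C x * (a * (C y * b))" by (simp only: mult.assoc)
  also have "\<dots> = C x * (C y * (a * b))" by (simp only: C_left_commute[of a])
  also have "\<dots> = C (x * y) * (a * b)" by (simp only: mult.assoc C_mult)
  finally show ?thesis .
qed

lemma B_mult:
  assumes "finite (snd p)" "finite (snd q)"
  shows "B p * B q = C (mc p q) * B (mp p q)"
proof -
  have fm: "finite (snd (mp p q))" using assms by (simp add: mp_def)
  have "sp_mult (sp_basis p) (sp_basis q) = sp_smult (mc p q) (sp_basis (mp p q))"
  proof
    fix r
    have "sp_mult (sp_basis p) (sp_basis q) r = (\<Sum>p'\<in>{p}. \<Sum>q'\<in>{q}. sp_basis p p' * sp_basis q q' * mono_times p' q' r)"
      by (rule sp_mult_eq) (auto simp: supp_basis)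
    then show "sp_mult (sp_basis p) (sp_basis q) r = sp_smult (mc p q) (sp_basis (mp p q)) r"
      by (simp add: sp_basis_def sp_smult_def mono_times_eq)
  qed
  then have "rep (B p * B q) = rep (C (mc p q) * B (mp p q))"
    by (simp only: rep_C_mult) (simp only: rep_mult rep_B assms fm)
  then show ?thesis by (simp only: rep_inject)
qed

lemma B_comm:
  assumes "finite (snd p)" "finite (snd q)"
  shows "B p * B q = C ((-1) ^ (card (snd p) * card (snd q))) * (B q * B p)"
proof -
  have "B p * B q = C (mc p q) * B (mp p q)" using assms by (rule B_mult)
  also have "\<dots> = C ((-1) ^ (card (snd p) * card (snd q))) * (C (mc q p) * B (mp q p))"
    using assms by (simp only: mp_comm[of p q] mc_swap[of p q] C_mult mult.assoc)
  also have "C (mc q p) * B (mp q p) = B q * B p" using assms by (simp only: B_mult)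
  finally show ?thesis .
qed

lemma one_B: "1 = B mone"
proof -
  have "rep 1 = rep (B mone)" by (simp add: rep_one rep_B mone_def sp_one_def)
  then show ?thesis by (simp only: rep_inject)
qed

lemma rep_sum: "rep (\<Sum>i\<in>I. g i) = (\<lambda>r. \<Sum>i\<in>I. rep (g i) r)"
proof (cases "finite I")
  case True
  then show ?thesis
    by (induction I rule: finite_induct) (simp_all add: rep_zero rep_add sp_add_def)
next
  case False
  then show ?thesis by (simp add: rep_zero)
qed

lemma fin_supp: "finite (sp_supp (rep a))"
  using rep_fspset[of a] by (simp add: fspset_def)
lemma supp_fin: "p \<in> sp_supp (rep a) \<Longrightarrow> finite (snd p)"
  using rep_fspset[of a] by (simp add: fspset_def)

lemma rep_CB: "finite (snd p) \<Longrightarrow> rep (C c * B p) r = (if r = p then c else 0)"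
  by (simp add: rep_C_mult rep_B sp_smult_def sp_basis_def)

lemma decomp_F:
  assumes "finite F" "sp_supp (rep a) \<subseteq> F" "\<forall>p\<in>F. finite (snd p)"
  shows "a = (\<Sum>p\<in>F. C (rep a p) * B p)"
proof -
  have "rep (\<Sum>p\<in>F. C (rep a p) * B p) = rep a"
  proof
    fix r
    have "rep (\<Sum>p\<in>F. C (rep a p) * B p) r = (\<Sum>p\<in>F. if r = p then rep a p else 0)"
      unfolding rep_sum using assms(3) by (intro sum.cong refl) (simp add: rep_CB)
    also have "\<dots> = rep a r"
      using assms(1,2) by (auto simp: sum.delta sp_supp_def)
    finally show "rep (\<Sum>p\<in>F. C (rep a p) * B p) r = rep a r" .
  qed
  then show ?thesis by (simp only: rep_inject)
qed

lemma decomp: "a = (\<Sum>p\<in>sp_supp (rep a). C (rep a p) * B p)"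
  by (rule decomp_F) (auto simp: fin_supp supp_fin)

definition lin :: "(mono \<Rightarrow> fsp) \<Rightarrow> fsp \<Rightarrow> fsp" where
  "lin \<Psi> a = (\<Sum>p\<in>sp_supp (rep a). C (rep a p) * \<Psi> p)"

lemma lin_eq:
  assumes "finite F" "sp_supp (rep a) \<subseteq> F"
  shows "lin \<Psi> a = (\<Sum>p\<in>F. C (rep a p) * \<Psi> p)"
  unfolding lin_def
  by (rule sum.mono_neutral_left) (use assms in \<open>auto simp: sp_supp_def C_zero\<close>)

lemma lin_add: "lin \<Psi> (a + b) = lin \<Psi> a + lin \<Psi> b"
proof -
  define F where "F = sp_supp (rep a) \<union> sp_supp (rep b)"
  have fF: "finite F" by (simp add: F_def fin_supp)
  have s: "sp_supp (rep (a + b)) \<subseteq> F" unfolding F_def rep_add by (rule supp_add)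
  have "lin \<Psi> (a + b) = (\<Sum>p\<in>F. C (rep (a + b) p) * \<Psi> p)" by (rule lin_eq[OF fF s])
  also have "\<dots> = (\<Sum>p\<in>F. C (rep a p) * \<Psi> p) + (\<Sum>p\<in>F. C (rep b p) * \<Psi> p)"
    by (simp add: rep_add sp_add_def C_add distrib_right sum.distrib)
  also have "\<dots> = lin \<Psi> a + lin \<Psi> b"
    by (simp add: lin_eq[OF fF] F_def)
  finally show ?thesis .
qed

lemma lin_zero: "lin \<Psi> 0 = 0"
  by (simp add: lin_def rep_zero sp_supp_def)

lemma lin_sum: "lin \<Psi> (\<Sum>i\<in>I. g i) = (\<Sum>i\<in>I. lin \<Psi> (g i))"
proof (cases "finite I")
  case True
  then show ?thesis by (induction I rule: finite_induct) (simp_all add: lin_zero lin_add)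
next
  case False
  then show ?thesis by (simp add: lin_zero)
qed

lemma lin_CB:
  assumes "finite (snd p)"
  shows "lin \<Psi> (C c * B p) = C c * \<Psi> p"
proof -
  have s: "sp_supp (rep (C c * B p)) \<subseteq> {p}"
    using assms by (auto simp: sp_supp_def rep_CB split: if_splits)
  show ?thesis using lin_eq[OF _ s] assms by (simp add: rep_CB)
qed

lemma lin_B: "finite (snd p) \<Longrightarrow> lin \<Psi> (B p) = \<Psi> p"
  using lin_CB[of p \<Psi> 1] by (simp add: C_one)

lemma lin_mult:
  assumes hyp: "\<And>p q. finite (snd p) \<Longrightarrow> finite (snd q) \<Longrightarrow> \<Psi> p * \<Psi> q = C (mc p q) * \<Psi> (mp p q)"
  shows "lin \<Psi> (a * b) = lin \<Psi> a * lin \<Psi> b"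
proof -
  define Sa where "Sa = sp_supp (rep a)"
  define Sb where "Sb = sp_supp (rep b)"
  have fa: "\<And>p. p \<in> Sa \<Longrightarrow> finite (snd p)" and fb: "\<And>q. q \<in> Sb \<Longrightarrow> finite (snd q)"
    by (auto simp: Sa_def Sb_def supp_fin)
  have "a * b = (\<Sum>p\<in>Sa. C (rep a p) * B p) * (\<Sum>q\<in>Sb. C (rep b q) * B q)"
    using decomp[of a] decomp[of b] by (simp add: Sa_def Sb_def)
  also have "\<dots> = (\<Sum>p\<in>Sa. \<Sum>q\<in>Sb. C (rep a p) * B p * (C (rep b q) * B q))"
    by (subst sum_distrib_right) (simp only: sum_distrib_left)
  also have "\<dots> = (\<Sum>p\<in>Sa. \<Sum>q\<in>Sb. C (rep a p * rep b q * mc p q) * B (mp p q))"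
    by (intro sum.cong refl) (simp only: C_mult_C, simp add: B_mult fa fb C_mult mult.assoc)
  finally have ab: "a * b = \<dots>" .
  have "lin \<Psi> (a * b) = (\<Sum>p\<in>Sa. \<Sum>q\<in>Sb. C (rep a p * rep b q * mc p q) * \<Psi> (mp p q))"
    unfolding ab lin_sum
    by (intro sum.cong refl) (simp add: lin_CB fa fb mp_def)
  also have "\<dots> = (\<Sum>p\<in>Sa. \<Sum>q\<in>Sb. C (rep a p) * \<Psi> p * (C (rep b q) * \<Psi> q))"
    by (intro sum.cong refl) (simp only: C_mult_C, simp add: hyp fa fb C_mult mult.assoc)
  also have "\<dots> = lin \<Psi> a * lin \<Psi> b"
    unfolding lin_def Sa_def[symmetric] Sb_def[symmetric]
    by (subst sum_distrib_right) (simp only: sum_distrib_left)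
  finally show ?thesis .
qed

lemma B0_B_comm: "finite (snd q) \<Longrightarrow> B (e, {}) * B q = B q * B (e, {})"
  using B_comm[of "(e,{})" q] by (simp add: C_one)

lemma B0_central: "B (e, {}) * a = a * B (e, {})"
proof -
  have "B (e, {}) * a = (\<Sum>p\<in>sp_supp (rep a). B (e, {}) * (C (rep a p) * B p))"
    by (subst decomp[of a]) (simp add: sum_distrib_left)
  also have "\<dots> = (\<Sum>p\<in>sp_supp (rep a). (C (rep a p) * B p) * B (e, {}))"
    by (intro sum.cong refl) (simp add: C_left_commute B0_B_comm supp_fin mult.assoc)
  also have "\<dots> = a * B (e, {})"
    by (subst (2) decomp[of a]) (simp add: sum_distrib_right)
  finally show ?thesis .
qed

lemma B0_mult: "B (e, {}) * B (e', {}) = B (\<lambda>i. e i + e' i, {})"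
  by (simp add: B_mult mc_def mono_sign_def mp_def C_one)

lemma X_central: "X k * a = a * X k"
  by (simp only: X_B B0_central)

lemma Xpow_B: "X k ^ n = B (\<lambda>i. if i = k then n else 0, {})"
proof (induction n)
  case 0
  then show ?case by (simp add: one_B mone_def)
next
  case (Suc n)
  then show ?case by (simp add: X_B B0_mult) (rule arg_cong[where f=B], auto)
qed

section \<open>The action\<close>

definition EXs :: "(nat \<Rightarrow> nat) \<Rightarrow> (nat \<Rightarrow> nat) \<Rightarrow> fsp" where
  "EXs \<sigma> e = prod_list (map (\<lambda>k. X (\<sigma> k) ^ e k) [0,1,2])"

definition esig :: "(nat \<Rightarrow> nat) \<Rightarrow> (nat \<Rightarrow> nat) \<Rightarrow> nat \<Rightarrow> nat" where
  "esig \<sigma> e = (\<lambda>i. (if \<sigma> 0 = i then e 0 else 0) + (if \<sigma> 1 = i then e 1 else 0) + (if \<sigma> 2 = i then e 2 else 0))"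

lemma EXs_B: "EXs \<sigma> e = B (esig \<sigma> e, {})"
  unfolding EXs_def by (simp add: Xpow_B B0_mult esig_def) (rule arg_cong[where f=B], auto)

lemma EXs_add: "EXs \<sigma> (\<lambda>k. e k + e' k) = EXs \<sigma> e * EXs \<sigma> e'"
  by (simp add: EXs_B B0_mult esig_def) (rule arg_cong[where f=B], auto)

lemma EXs_central: "EXs \<sigma> e * a = a * EXs \<sigma> e"
  by (simp only: EXs_B B0_central)

lemma EXs_zero: "EXs \<sigma> (\<lambda>_. 0) = 1"
  by (simp add: EXs_def)

definition th :: "(nat \<Rightarrow> nat) \<Rightarrow> nat \<times> nat \<Rightarrow> fsp" where
  "th \<sigma> = (\<lambda>(j,k). og j (\<sigma> k))"

definition AMf :: "(nat \<Rightarrow> nat) \<Rightarrow> mono \<Rightarrow> fsp" where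
  "AMf \<sigma> p = EXs \<sigma> (fst p) * OP (th \<sigma>) (snd p)"

lemma rep_prod_list: "rep (prod_list xs) = sp_prod_list (map rep xs)"
  by (induction xs) (simp_all add: rep_one rep_mult sp_prod_list_def)

lemma rep_power: "rep (x ^ n) = sp_pow (rep x) n"
  by (induction n) (simp_all add: rep_one rep_mult)

lemma rep_X: "rep (X k) = evgen k"
  by (simp add: X_B rep_B evgen_def)
lemma rep_og: "rep (og j k) = oddgen j k"
  by (simp add: og_B rep_B oddgen_def)

lemma rep_AMf: "rep (AMf \<sigma> p) = act_mono \<sigma> p"
proof -
  have t: "rep \<circ> th \<sigma> = (\<lambda>(j,k). oddgen j (\<sigma> k))" by (auto simp: th_def rep_og)
  have e: "rep (EXs \<sigma> e) = sp_prod_list (map (\<lambda>k. sp_pow (evgen (\<sigma> k)) (e k)) [0,1,2])" for e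
    by (simp only: EXs_def rep_prod_list map_map o_def rep_power rep_X)
  have o: "rep (OP (th \<sigma>) S) = sp_prod_list (map (\<lambda>(j,k). oddgen j (\<sigma> k)) (sorted_list_of_set S))" for S
    by (simp only: OP_def rep_prod_list map_map t)
  show ?thesis by (simp only: AMf_def rep_mult e o act_mono_def)
qed

lemma th_anticomm:
  assumes "inj \<sigma>"
  shows "anticomm (th \<sigma>)"
proof
  fix x y :: "nat \<times> nat"
  assume xy: "x \<noteq> y"
  obtain j k where x: "x = (j,k)" by (cases x)
  obtain j' k' where y: "y = (j',k')" by (cases y)
  have "(j, \<sigma> k) \<noteq> (j', \<sigma> k')" using xy assms by (auto simp: x y inj_eq)
  then show "th \<sigma> x * th \<sigma> y = - (th \<sigma> y * th \<sigma> x)"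
    using B_comm[of "(\<lambda>_. 0, {(j, \<sigma> k)})" "(\<lambda>_. 0, {(j', \<sigma> k')})"]
    by (simp add: th_def x y og_B C_uminus C_one)
next
  fix x :: "nat \<times> nat"
  obtain j k where x: "x = (j,k)" by (cases x)
  show "th \<sigma> x * th \<sigma> x = 0"
    by (simp add: th_def x og_B B_mult mc_def C_zero)
qed

lemma OP_th_mult:
  assumes "inj \<sigma>" "finite S" "finite T"
  shows "OP (th \<sigma>) S * OP (th \<sigma>) T = (if S \<inter> T = {} then C (mono_sign S T) * OP (th \<sigma>) (S \<union> T) else 0)"
  using anticomm.OP_mult[OF th_anticomm[OF assms(1)] assms(2,3)]
  by (simp add: mono_sign_invs C_neg1_power)

lemma AMf_mult:
  assumes "inj \<sigma>" "finite (snd p)" "finite (snd q)"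
  shows "AMf \<sigma> p * AMf \<sigma> q = C (mc p q) * AMf \<sigma> (mp p q)"
proof -
  have "AMf \<sigma> p * AMf \<sigma> q = EXs \<sigma> (fst p) * (OP (th \<sigma>) (snd p) * EXs \<sigma> (fst q)) * OP (th \<sigma>) (snd q)"
    by (simp add: AMf_def mult.assoc)
  also have "\<dots> = (EXs \<sigma> (fst p) * EXs \<sigma> (fst q)) * (OP (th \<sigma>) (snd p) * OP (th \<sigma>) (snd q))"
    by (simp only: EXs_central[of _ "fst q"] mult.assoc)
  also have "\<dots> = EXs \<sigma> (fst (mp p q)) * (if snd p \<inter> snd q = {} then C (mono_sign (snd p) (snd q)) * OP (th \<sigma>) (snd (mp p q)) else 0)"
    by (simp add: OP_th_mult assms EXs_add[symmetric] mp_def)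
  also have "\<dots> = C (mc p q) * AMf \<sigma> (mp p q)"
    by (simp add: mc_def AMf_def C_zero C_left_commute)
  finally show ?thesis .
qed

definition actf :: "(nat \<Rightarrow> nat) \<Rightarrow> fsp \<Rightarrow> fsp" where
  "actf \<sigma> = lin (AMf \<sigma>)"

lemma rep_actf: "rep (actf \<sigma> a) = act \<sigma> (rep a)"
  by (simp add: actf_def lin_def act_def rep_sum rep_C_mult sp_smult_def rep_AMf fun_eq_iff)

lemma actf_mult: "inj \<sigma> \<Longrightarrow> actf \<sigma> (a * b) = actf \<sigma> a * actf \<sigma> b"
  unfolding actf_def by (rule lin_mult) (simp add: AMf_mult)

lemma actf_add: "actf \<sigma> (a + b) = actf \<sigma> a + actf \<sigma> b"
  by (simp add: actf_def lin_add)

lemma actf_sum: "actf \<sigma> (\<Sum>i\<in>I. g i) = (\<Sum>i\<in>I. actf \<sigma> (g i))"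
  by (simp add: actf_def lin_sum)

lemma actf_B: "finite (snd p) \<Longrightarrow> actf \<sigma> (B p) = AMf \<sigma> p"
  by (simp add: actf_def lin_B)

lemma actf_CB: "finite (snd p) \<Longrightarrow> actf \<sigma> (C c * B p) = C c * AMf \<sigma> p"
  by (simp add: actf_def lin_CB)

lemma AMf_mone: "AMf \<sigma> mone = 1"
  by (simp add: AMf_def mone_def EXs_zero OP_def)

lemma actf_C: "actf \<sigma> (C c) = C c"
proof -
  have "C c = C c * B mone" by (simp add: one_B[symmetric])
  then have "actf \<sigma> (C c) = actf \<sigma> (C c * B mone)" by simp
  also have "\<dots> = C c * AMf \<sigma> mone" by (rule actf_CB) (simp add: mone_def)
  finally show ?thesis by (simp add: AMf_mone)
qed

lemma actf_one: "actf \<sigma> 1 = 1"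
  using actf_C[of \<sigma> 1] by (simp add: C_one)

lemma actf_X: "k < 3 \<Longrightarrow> actf \<sigma> (X k) = X (\<sigma> k)"
proof -
  assume k: "k < 3"
  have "actf \<sigma> (X k) = AMf \<sigma> (\<lambda>i. if i = k then 1 else 0, {})"
    by (simp add: X_B actf_B)
  also have "\<dots> = EXs \<sigma> (\<lambda>i. if i = k then 1 else 0)" by (simp add: AMf_def OP_def)
  also have "\<dots> = X (\<sigma> k)"
    using k by (auto simp: EXs_def less_Suc_eq numeral_3_eq_3)
  finally show ?thesis .
qed

lemma actf_og: "actf \<sigma> (og j k) = og j (\<sigma> k)"
proof -
  have "actf \<sigma> (og j k) = AMf \<sigma> (\<lambda>_. 0, {(j,k)})" by (simp add: og_B actf_B)
  also have "\<dots> = og j (\<sigma> k)" by (simp add: AMf_def EXs_zero OP_def th_def)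
  finally show ?thesis .
qed

lemma actf_prod_list: "inj \<sigma> \<Longrightarrow> actf \<sigma> (prod_list xs) = prod_list (map (actf \<sigma>) xs)"
  by (induction xs) (simp_all add: actf_one actf_mult)

lemma actf_power: "inj \<sigma> \<Longrightarrow> actf \<sigma> (x ^ n) = actf \<sigma> x ^ n"
  by (induction n) (simp_all add: actf_one actf_mult)

definition OI :: "nat \<Rightarrow> nat set \<Rightarrow> fsp" where
  "OI k I = prod_list (map (\<lambda>i. og i k) (sorted_list_of_set I))"

definition L :: "nat \<Rightarrow> nat \<times> nat set \<Rightarrow> fsp" where
  "L k u = X k ^ fst u * OI k (snd u)"

definition P :: "nat \<times> nat set \<Rightarrow> fsp" where
  "P u = L 0 u + (L 1 u + L 2 u)"

definition PS :: "nat \<Rightarrow> fsp" where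
  "PS n = X 0 ^ n + (X 1 ^ n + X 2 ^ n)"

definition LR :: "nat \<Rightarrow> fsp" where
  "LR j = og j 0 + (og j 1 + og j 2)"

lemma rep_OI: "rep (OI k I) = oddI k I"
  by (simp only: OI_def oddI_def rep_prod_list map_map o_def rep_og)

lemma rep_L: "rep (L k (d, I)) = sp_mult (sp_pow (evgen k) d) (oddI k I)"
  by (simp add: L_def rep_mult rep_power rep_X rep_OI)

lemma rep_P: "1 \<le> i \<Longrightarrow> rep (P (i - 1, I)) = zgen i I"
  by (simp add: P_def rep_add rep_L zgen_def)

lemma rep_PS: "rep (PS n) = psum n"
  by (simp add: PS_def rep_add rep_power rep_X psum_def)

lemma rep_LR: "rep (LR j) = linrel j"
  by (simp add: LR_def rep_add rep_og linrel_def)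

lemma Abs_rep_eq: "f \<in> fspset \<Longrightarrow> f = rep a \<longleftrightarrow> Abs f = a"
  by (metis Abs_inverse rep_inverse)

lemma Abs_add: "f \<in> fspset \<Longrightarrow> g \<in> fspset \<Longrightarrow> Abs (sp_add f g) = Abs f + Abs g"
  by (metis Abs_inverse rep_add rep_inverse)
lemma Abs_mult: "f \<in> fspset \<Longrightarrow> g \<in> fspset \<Longrightarrow> Abs (sp_mult f g) = Abs f * Abs g"
  by (metis Abs_inverse rep_mult rep_inverse)

lemma perm3:
  assumes "\<sigma> permutes {0::nat,1,2}"
  shows "(\<sigma> 0, \<sigma> 1, \<sigma> 2) \<in> {(0,1,2),(0,2,1),(1,0,2),(1,2,0),(2,0,1),(2,1,0)}"
proof -
  have i: "\<sigma> 0 \<in> {0,1,2}" "\<sigma> 1 \<in> {0,1,2}" "\<sigma> 2 \<in> {0,1,2}"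
    using permutes_in_image[OF assms] by auto
  then have a: "\<sigma> 0 = 0 \<or> \<sigma> 0 = 1 \<or> \<sigma> 0 = 2" and b: "\<sigma> 1 = 0 \<or> \<sigma> 1 = 1 \<or> \<sigma> 1 = 2"
    and c: "\<sigma> 2 = 0 \<or> \<sigma> 2 = 1 \<or> \<sigma> 2 = 2" by auto
  have "inj \<sigma>" using assms by (rule permutes_inj)
  then have d: "\<sigma> 0 \<noteq> \<sigma> 1" "\<sigma> 0 \<noteq> \<sigma> 2" "\<sigma> 1 \<noteq> \<sigma> 2"
    by (simp_all add: inj_eq)
  show ?thesis using a b c d by (elim disjE; simp)
qed

lemma actf_OI: "inj \<sigma> \<Longrightarrow> actf \<sigma> (OI k I) = OI (\<sigma> k) I"
  by (simp add: OI_def actf_prod_list actf_og o_def)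

lemma actf_L: "inj \<sigma> \<Longrightarrow> k < 3 \<Longrightarrow> actf \<sigma> (L k u) = L (\<sigma> k) u"
  by (simp add: L_def actf_mult actf_power actf_X actf_OI)

lemma actf_P:
  assumes "\<sigma> permutes {0::nat,1,2}"
  shows "actf \<sigma> (P u) = P u"
proof -
  have inj: "inj \<sigma>" using assms by (rule permutes_inj)
  have "actf \<sigma> (P u) = L (\<sigma> 0) u + (L (\<sigma> 1) u + L (\<sigma> 2) u)"
    by (simp add: P_def actf_add actf_L inj)
  then show ?thesis using perm3[OF assms] by (auto simp: P_def add_ac)
qed

lemma actf_PS:
  assumes "\<sigma> permutes {0::nat,1,2}"
  shows "actf \<sigma> (PS n) = PS n"
proof -
  have inj: "inj \<sigma>" using assms by (rule permutes_inj)
  have "actf \<sigma> (PS n) = X (\<sigma> 0) ^ n + (X (\<sigma> 1) ^ n + X (\<sigma> 2) ^ n)"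
    by (simp add: PS_def actf_add actf_power actf_X inj)
  then show ?thesis using perm3[OF assms] by (auto simp: PS_def add_ac)
qed

lemma actf_LR:
  assumes "\<sigma> permutes {0::nat,1,2}"
  shows "actf \<sigma> (LR j) = LR j"
proof -
  have "actf \<sigma> (LR j) = og j (\<sigma> 0) + (og j (\<sigma> 1) + og j (\<sigma> 2))"
    by (simp add: LR_def actf_add actf_og)
  then show ?thesis using perm3[OF assms] by (auto simp: LR_def add_ac)
qed

lemma actf_zero: "actf \<sigma> 0 = 0"
  by (simp add: actf_def lin_zero)

lemma actf_uminus: "actf \<sigma> (- a) = - actf \<sigma> a"
proof -
  have "actf \<sigma> (- a) + actf \<sigma> a = 0" by (simp add: actf_add[symmetric] actf_zero)
  then show ?thesis by (simp add: eq_neg_iff_add_eq_0)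
qed

lemma actf_minus: "actf \<sigma> (a - b) = actf \<sigma> a - actf \<sigma> b"
  by (simp only: diff_conv_add_uminus actf_add actf_uminus)

definition good :: "nat \<Rightarrow> mono \<Rightarrow> bool" where
  "good m p \<longleftrightarrow> (\<forall>k\<ge>3. fst p k = 0) \<and> snd p \<subseteq> {1..m} \<times> {0,1,2}"

definition Ar :: "nat \<Rightarrow> fsp set" where
  "Ar m = {a. \<forall>p\<in>sp_supp (rep a). good m p}"

lemma Aring_fspset: "Aring m \<subseteq> fspset"
proof
  fix f assume f: "f \<in> Aring m"
  have "\<forall>p\<in>sp_supp f. finite (snd p)"
  proof
    fix p assume "p \<in> sp_supp f"
    then have "snd p \<subseteq> {1..m} \<times> {0,1,2}" using f by (auto simp: Aring_def case_prod_beta)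
    then show "finite (snd p)" by (rule finite_subset) simp
  qed
  then show "f \<in> fspset" using f by (simp add: Aring_def fspset_def)
qed

lemma Ar_iff: "a \<in> Ar m \<longleftrightarrow> rep a \<in> Aring m"
  unfolding Ar_def Aring_def good_def using fin_supp[of a] by (simp add: case_prod_beta)

lemma Ar_add: "a \<in> Ar m \<Longrightarrow> b \<in> Ar m \<Longrightarrow> a + b \<in> Ar m"
  using supp_add[of "rep a" "rep b"] by (auto simp: Ar_def rep_add)

lemma Ar_mult: "a \<in> Ar m \<Longrightarrow> b \<in> Ar m \<Longrightarrow> a * b \<in> Ar m"
proof -
  assume a: "a \<in> Ar m" and b: "b \<in> Ar m"
  show ?thesis unfolding Ar_def mem_Collect_eq
  proof (rule ballI)
    fix r assume "r \<in> sp_supp (rep (a * b))"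
    moreover have "sp_supp (rep (a * b)) \<subseteq> (\<lambda>(p,q). mp p q) ` (sp_supp (rep a) \<times> sp_supp (rep b))"
      by (simp only: rep_mult) (rule supp_mult)
    ultimately have "r \<in> (\<lambda>(p,q). mp p q) ` (sp_supp (rep a) \<times> sp_supp (rep b))" by blast
    then obtain p q where "p \<in> sp_supp (rep a)" "q \<in> sp_supp (rep b)" "r = mp p q" by auto
    then show "good m r" using a b by (auto simp: Ar_def good_def mp_def)
  qed
qed

lemma Ar_C: "C c \<in> Ar m"
  by (auto simp: Ar_def rep_C sp_supp_def sp_smult_def sp_one_def sp_basis_def good_def)

lemma Ar_one: "1 \<in> Ar m" using Ar_C[of 1 m] by (simp add: C_one)
lemma Ar_zero: "0 \<in> Ar m" using Ar_C[of 0 m] by (simp add: C_zero)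

lemma Ar_sum: "(\<And>i. i \<in> I \<Longrightarrow> g i \<in> Ar m) \<Longrightarrow> (\<Sum>i\<in>I. g i) \<in> Ar m"
proof (induction I rule: infinite_finite_induct)
  case (infinite A) then show ?case by (simp add: Ar_zero)
next
  case empty then show ?case by (simp add: Ar_zero)
next
  case (insert x F) then show ?case by (simp add: Ar_add)
qed

lemma Ar_prod_list: "(\<And>x. x \<in> set xs \<Longrightarrow> x \<in> Ar m) \<Longrightarrow> prod_list xs \<in> Ar m"
  by (induction xs) (simp_all add: Ar_one Ar_mult)

lemma Ar_B: "finite (snd p) \<Longrightarrow> good m p \<Longrightarrow> B p \<in> Ar m"
  by (simp add: Ar_def rep_B supp_basis)

lemma Ar_og: "1 \<le> j \<Longrightarrow> j \<le> m \<Longrightarrow> k < 3 \<Longrightarrow> og j k \<in> Ar m"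
  unfolding og_B by (rule Ar_B) (auto simp: good_def)

lemma Ar_AMf:
  assumes "\<sigma> permutes {0::nat,1,2}" "good m p" "finite (snd p)"
  shows "AMf \<sigma> p \<in> Ar m"
proof -
  have s: "\<sigma> k \<in> {0,1,2} \<longleftrightarrow> k \<in> {0,1,2}" for k using permutes_in_image[OF assms(1)] .
  have "EXs \<sigma> (fst p) \<in> Ar m"
  proof -
    have "good m (esig \<sigma> (fst p), {})"
      using s[of 0] s[of 1] s[of 2] by (auto simp: good_def esig_def)
    then show ?thesis by (simp add: EXs_B Ar_B)
  qed
  moreover have "OP (th \<sigma>) (snd p) \<in> Ar m"
    unfolding OP_def
  proof (rule Ar_prod_list)
    fix x assume "x \<in> set (map (th \<sigma>) (sorted_list_of_set (snd p)))"
    then obtain j k where jk: "(j,k) \<in> snd p" "x = og j (\<sigma> k)"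
      using assms(3) by (auto simp: th_def)
    then have "1 \<le> j" "j \<le> m" "k \<in> {0,1,2}" using assms(2) by (auto simp: good_def)
    then show "x \<in> Ar m" using jk s[of k] by (auto intro!: Ar_og)
  qed
  ultimately show ?thesis by (simp add: AMf_def Ar_mult)
qed

lemma Ar_actf:
  assumes "\<sigma> permutes {0::nat,1,2}" "a \<in> Ar m"
  shows "actf \<sigma> a \<in> Ar m"
  unfolding actf_def lin_def
  by (intro Ar_sum Ar_mult Ar_C Ar_AMf[OF assms(1)]) (use assms(2) in \<open>auto simp: Ar_def supp_fin\<close>)

lemma Jideal_fspset: "f \<in> Jideal m \<Longrightarrow> f \<in> fspset"
proof (induction rule: Jideal.induct)
  case (gen_p1) then show ?case using rep_fspset[of "PS 1"] by (simp add: rep_PS)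
next
  case (gen_p2) then show ?case using rep_fspset[of "PS 2"] by (simp add: rep_PS)
next
  case (gen_p6) then show ?case using rep_fspset[of "PS 6"] by (simp add: rep_PS)
next
  case (gen_lin j) then show ?case using rep_fspset[of "LR j"] by (simp add: rep_LR)
next
  case zero then show ?case by (rule fspset_zero)
next
  case (add f g) then show ?case by (blast intro: fspset_add)
next
  case (mult_left h f) then show ?case using Aring_fspset by (auto intro: fspset_mult)
next
  case (mult_right h f) then show ?case using Aring_fspset by (auto intro: fspset_mult)
qed

definition Jf :: "nat \<Rightarrow> fsp set" where
  "Jf m = {a. rep a \<in> Jideal m}"

lemma Jf_add: "a \<in> Jf m \<Longrightarrow> b \<in> Jf m \<Longrightarrow> a + b \<in> Jf m"
  by (simp add: Jf_def rep_add Jideal.add)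
lemma Jf_mult_left: "h \<in> Ar m \<Longrightarrow> a \<in> Jf m \<Longrightarrow> h * a \<in> Jf m"
  by (simp add: Jf_def rep_mult Jideal.mult_left Ar_iff)
lemma Jf_C: "a \<in> Jf m \<Longrightarrow> C c * a \<in> Jf m"
  by (simp add: Jf_mult_left Ar_C)
lemma Jf_uminus: "a \<in> Jf m \<Longrightarrow> - a \<in> Jf m"
  using Jf_C[of a m "-1"] by (simp add: C_uminus C_one)
lemma Jf_minus: "a \<in> Jf m \<Longrightarrow> b \<in> Jf m \<Longrightarrow> a - b \<in> Jf m"
  by (simp only: diff_conv_add_uminus) (intro Jf_add Jf_uminus)
lemma Jf_zero: "0 \<in> Jf m"
  by (simp add: Jf_def rep_zero Jideal.zero)
lemma Jf_sum: "(\<And>i. i \<in> I \<Longrightarrow> g i \<in> Jf m) \<Longrightarrow> (\<Sum>i\<in>I. g i) \<in> Jf m"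
proof (induction I rule: infinite_finite_induct)
  case (infinite A) then show ?case by (simp add: Jf_zero)
next
  case empty then show ?case by (simp add: Jf_zero)
next
  case (insert x F) then show ?case by (simp add: Jf_add)
qed

lemma actf_Jideal:
  assumes "\<sigma> permutes {0::nat,1,2}"
  shows "f \<in> Jideal m \<Longrightarrow> actf \<sigma> (Abs f) \<in> Jf m"
proof (induction rule: Jideal.induct)
  case gen_p1
  have e: "Abs (psum 1) = PS 1" using rep_inverse[of "PS 1"] by (simp only: rep_PS)
  show ?case unfolding Jf_def mem_Collect_eq e actf_PS[OF assms] rep_PS by (rule Jideal.gen_p1)
next
  case gen_p2
  have e: "Abs (psum 2) = PS 2" using rep_inverse[of "PS 2"] by (simp only: rep_PS)
  show ?case unfolding Jf_def mem_Collect_eq e actf_PS[OF assms] rep_PS by (rule Jideal.gen_p2)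
next
  case gen_p6
  have e: "Abs (psum 6) = PS 6" using rep_inverse[of "PS 6"] by (simp only: rep_PS)
  show ?case unfolding Jf_def mem_Collect_eq e actf_PS[OF assms] rep_PS by (rule Jideal.gen_p6)
next
  case (gen_lin j)
  have e: "Abs (linrel j) = LR j" using rep_inverse[of "LR j"] by (simp only: rep_LR)
  show ?case unfolding Jf_def mem_Collect_eq e actf_LR[OF assms] rep_LR using gen_lin by (rule Jideal.gen_lin)
next
  case zero
  have e: "Abs (\<lambda>_. 0) = 0" using rep_inverse[of 0] by (simp only: rep_zero)
  show ?case unfolding Jf_def mem_Collect_eq e actf_zero rep_zero by (rule Jideal.zero)
next
  case (add f g)
  have "Abs (sp_add f g) = Abs f + Abs g"
    using add.hyps by (simp add: Abs_add Jideal_fspset)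
  then show ?case using add.IH by (simp add: actf_add Jf_add)
next
  case (mult_left h f)
  have hf: "h \<in> fspset" using mult_left.hyps(1) Aring_fspset by blast
  have ff: "f \<in> fspset" using mult_left.hyps(2) by (rule Jideal_fspset)
  have "Abs (sp_mult h f) = Abs h * Abs f" using hf ff by (simp add: Abs_mult)
  moreover have "actf \<sigma> (Abs h) \<in> Ar m"
    using mult_left.hyps hf by (intro Ar_actf[OF assms]) (simp add: Ar_iff Abs_inverse)
  ultimately show ?case using mult_left.IH
    by (simp add: actf_mult permutes_inj[OF assms] Jf_mult_left)
next
  case (mult_right h f)
  have hf: "h \<in> fspset" using mult_right.hyps(1) Aring_fspset by blast
  have ff: "f \<in> fspset" using mult_right.hyps(2) by (rule Jideal_fspset)
  have "Abs (sp_mult f h) = Abs f * Abs h" using hf ff by (simp add: Abs_mult)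
  moreover have "actf \<sigma> (Abs h) \<in> Ar m"
    using mult_right.hyps hf by (intro Ar_actf[OF assms]) (simp add: Ar_iff Abs_inverse)
  ultimately show ?case using mult_right.IH
    by (simp add: actf_mult permutes_inj[OF assms] Jf_def rep_mult Jideal.mult_right Ar_iff)
qed

definition SA :: "nat \<Rightarrow> fsp set" where
  "SA m = {a. rep a \<in> subalg (Zgens m)}"

lemma Zgens_fspset: "Zgens m \<subseteq> fspset"
proof
  fix g assume "g \<in> Zgens m"
  then obtain i I where "g = zgen i I" "1 \<le> i" by (auto simp: Zgens_def)
  then show "g \<in> fspset" using rep_P[of i I] rep_fspset by metis
qed

lemma subalg_fspset: "f \<in> subalg G \<Longrightarrow> G \<subseteq> fspset \<Longrightarrow> f \<in> fspset"
  by (induction rule: subalg.induct)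
     (auto intro: fspset_smult fspset_one fspset_add fspset_mult)

lemma SA_C: "C c \<in> SA m" by (simp add: SA_def rep_C subalg.const)
lemma SA_add: "a \<in> SA m \<Longrightarrow> b \<in> SA m \<Longrightarrow> a + b \<in> SA m"
  by (simp add: SA_def rep_add subalg.add)
lemma SA_mult: "a \<in> SA m \<Longrightarrow> b \<in> SA m \<Longrightarrow> a * b \<in> SA m"
  by (simp add: SA_def rep_mult subalg.mult)
lemma SA_Cmult: "a \<in> SA m \<Longrightarrow> C c * a \<in> SA m"
  by (simp add: SA_mult SA_C)
lemma SA_uminus: "a \<in> SA m \<Longrightarrow> - a \<in> SA m"
  using SA_Cmult[of a m "-1"] by (simp add: C_uminus C_one)
lemma SA_minus: "a \<in> SA m \<Longrightarrow> b \<in> SA m \<Longrightarrow> a - b \<in> SA m"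
  by (simp only: diff_conv_add_uminus) (intro SA_add SA_uminus)
lemma SA_zero: "0 \<in> SA m" using SA_C[of 0 m] by (simp add: C_zero)
lemma SA_one: "1 \<in> SA m" using SA_C[of 1 m] by (simp add: C_one)
lemma SA_sum: "(\<And>i. i \<in> I \<Longrightarrow> g i \<in> SA m) \<Longrightarrow> (\<Sum>i\<in>I. g i) \<in> SA m"
proof (induction I rule: infinite_finite_induct)
  case (infinite A) then show ?case by (simp add: SA_zero)
next
  case empty then show ?case by (simp add: SA_zero)
next
  case (insert x F) then show ?case by (simp add: SA_add)
qed

lemma SA_P_gen:
  assumes "d \<le> 5" "card I \<le> 3" "I \<subseteq> {1..m}"
  shows "P (d, I) \<in> SA m"
proof -
  have "zgen (d + 1) I \<in> Zgens m" unfolding Zgens_def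
    using assms by (intro CollectI exI[of _ "d+1"] exI[of _ I]) auto
  then show ?thesis using rep_P[of "d+1" I] by (simp add: SA_def subalg.gen)
qed

lemma actf_subalg:
  assumes "\<sigma> permutes {0::nat,1,2}"
  shows "f \<in> subalg (Zgens m) \<Longrightarrow> actf \<sigma> (Abs f) = Abs f"
proof (induction rule: subalg.induct)
  case (const c)
  then show ?case using actf_C[of \<sigma> c] by (simp add: C_def)
next
  case (gen g)
  then obtain i I where g: "g = zgen i I" "1 \<le> i" by (auto simp: Zgens_def)
  then have "Abs g = P (i - 1, I)" using rep_P[of i I] rep_inverse by metis
  then show ?case using actf_P[OF assms] by simp
next
  case (add f g)
  then have "Abs (sp_add f g) = Abs f + Abs g"
    using Zgens_fspset by (simp add: Abs_add subalg_fspset)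
  then show ?case using add.IH by (simp add: actf_add)
next
  case (mult f g)
  then have "Abs (sp_mult f g) = Abs f * Abs g"
    using Zgens_fspset by (simp add: Abs_mult subalg_fspset)
  then show ?case using mult.IH by (simp add: actf_mult permutes_inj[OF assms])
qed

section \<open>The easy direction\<close>

lemma easy_direction:
  assumes f: "f \<in> Aring m" and g: "g \<in> subalg (Zgens m)" and fg: "sp_sub f g \<in> Jideal m"
  shows "invariant_class m f"
  unfolding invariant_class_def
proof (intro allI impI)
  fix \<sigma> :: "nat \<Rightarrow> nat" assume \<sigma>: "\<sigma> permutes {0,1,2}"
  have ff: "f \<in> fspset" using f Aring_fspset by blast
  have gf: "g \<in> fspset" using g Zgens_fspset subalg_fspset by blast
  define a where "a = Abs f"
  define b where "b = Abs g"
  have ra: "rep a = f" and rb: "rep b = g" using ff gf by (simp_all add: a_def b_def Abs_inverse)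
  have ab: "a - b \<in> Jf m" using fg by (simp add: Jf_def rep_minus ra rb)
  have "Abs (rep (a - b)) = a - b" by (rule rep_inverse)
  then have "actf \<sigma> (a - b) \<in> Jf m"
    using actf_Jideal[OF \<sigma>, of "rep (a - b)" m] ab by (simp add: Jf_def)
  moreover have "actf \<sigma> b = b" using actf_subalg[OF \<sigma> g] by (simp add: b_def)
  ultimately have "actf \<sigma> (a - b) - (a - b) \<in> Jf m" using ab by (simp add: Jf_minus)
  moreover have "actf \<sigma> (a - b) - (a - b) = actf \<sigma> a - a"
    using \<open>actf \<sigma> b = b\<close> by (simp add: actf_minus)
  ultimately have "actf \<sigma> a - a \<in> Jf m" by simp
  then show "sp_sub (act \<sigma> f) f \<in> Jideal m"
    by (simp add: Jf_def rep_minus rep_actf ra)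
qed

lemma OI_insert_min:
  assumes "finite A" "\<forall>x\<in>A. a < x"
  shows "OI k (insert a A) = og a k * OI k A"
  using sorted_insert_min[OF assms] by (simp add: OI_def)

lemma OI_B: "finite I \<Longrightarrow> OI k I = B (\<lambda>_. 0, I \<times> {k})"
proof (induction I rule: finite_linorder_min_induct)
  case empty
  then show ?case by (simp add: OI_def one_B mone_def)
next
  case (insert a A)
  have aA: "(a,k) \<notin> A \<times> {k}" using insert by auto
  have inv: "invs {(a,k)} (A \<times> {k}) = {}" using insert by (auto simp: invs_def)
  have "OI k (insert a A) = B (\<lambda>_. 0, {(a,k)}) * B (\<lambda>_. 0, A \<times> {k})"
    using insert by (simp add: OI_insert_min og_B)
  also have "\<dots> = B (\<lambda>_. 0, insert a A \<times> {k})"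
    using insert aA inv by (simp add: B_mult mc_def mp_def mono_sign_invs C_one)
  finally show ?case .
qed

definition dl :: "nat \<Rightarrow> nat \<Rightarrow> nat \<Rightarrow> nat" where
  "dl k d = (\<lambda>i. if i = k then d else 0)"

lemma L_B: "finite I \<Longrightarrow> L k (d, I) = B (dl k d, I \<times> {k})"
  by (simp add: L_def Xpow_B OI_B B_mult mc_def mp_def mono_sign_def C_one dl_def)

definition bs :: "nat set \<Rightarrow> nat set \<Rightarrow> rat" where
  "bs I J = (if I \<inter> J = {} then (-1) ^ card (invs I J) else 0)"

definition mu :: "nat \<times> nat set \<Rightarrow> nat \<times> nat set \<Rightarrow> nat \<times> nat set" where
  "mu x y = (fst x + fst y, snd x \<union> snd y)"

definition gs :: "nat \<times> nat set \<Rightarrow> nat \<times> nat set \<Rightarrow> rat" where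
  "gs x y = (-1) ^ (card (snd x) * card (snd y))"

lemma invs_times: "card (invs (I \<times> {k}) (J \<times> {k})) = card (invs I J)"
proof -
  have "invs (I \<times> {k}) (J \<times> {k}) = (\<lambda>(i,j). ((i,k),(j,k))) ` invs I J"
    by (auto simp: invs_def image_iff)
  moreover have "inj_on (\<lambda>(i,j). ((i,k),(j,k))) (invs I J)" by (auto simp: inj_on_def)
  ultimately show ?thesis by (simp add: card_image)
qed

lemma L_mult_same:
  assumes "finite (snd x)" "finite (snd y)"
  shows "L k x * L k y = C (bs (snd x) (snd y)) * L k (mu x y)"
proof -
  obtain d I where x: "x = (d, I)" by (cases x)
  obtain d' J where y: "y = (d', J)" by (cases y)
  have fi: "finite I" "finite J" using assms by (simp_all add: x y)
  have e: "mono_sign (I \<times> {k}) (J \<times> {k}) = (-1) ^ card (invs I J)"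
    by (simp add: mono_sign_invs invs_times)
  have i: "(I \<times> {k} \<inter> J \<times> {k} = {}) = (I \<inter> J = {})" by blast
  have m: "mp (dl k d, I \<times> {k}) (dl k d', J \<times> {k}) = (dl k (d + d'), (I \<union> J) \<times> {k})"
    by (auto simp: mp_def dl_def)
  show ?thesis
    using fi by (simp add: x y L_B B_mult mc_def e i m mu_def bs_def)
qed

lemma L_comm:
  assumes "finite (snd x)" "finite (snd y)"
  shows "L k x * L l y = C (gs x y) * (L l y * L k x)"
proof -
  obtain d I where x: "x = (d, I)" by (cases x)
  obtain d' J where y: "y = (d', J)" by (cases y)
  have fi: "finite I" "finite J" using assms by (simp_all add: x y)
  show ?thesis using fi B_comm[of "(dl k d, I \<times> {k})" "(dl l d', J \<times> {l})"]
    by (simp add: x y L_B gs_def card_cartesian_product)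
qed

section \<open>Identities at three points\<close>

definition S3 :: "(nat \<Rightarrow> fsp) \<Rightarrow> fsp" where
  "S3 F = F 0 + F 1 + F 2"

definition D3 :: "(nat \<Rightarrow> fsp) \<Rightarrow> (nat \<Rightarrow> fsp) \<Rightarrow> (nat \<Rightarrow> fsp) \<Rightarrow> fsp" where
  "D3 F G H = F 0 * G 1 * H 2 + F 0 * G 2 * H 1 + F 1 * G 0 * H 2 + F 1 * G 2 * H 0 + F 2 * G 0 * H 1 + F 2 * G 1 * H 0"

definition Mx :: "(nat \<Rightarrow> fsp) \<Rightarrow> (nat \<Rightarrow> fsp) \<Rightarrow> (nat \<Rightarrow> fsp) \<Rightarrow> fsp" where
  "Mx F G H = S3 (\<lambda>k. S3 (\<lambda>l. F k * G l * H k))"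

definition R3 :: "(nat \<Rightarrow> fsp) \<Rightarrow> (nat \<Rightarrow> fsp) \<Rightarrow> (nat \<Rightarrow> fsp) \<Rightarrow> fsp" where
  "R3 F G H = S3 F * S3 G * S3 H - S3 (\<lambda>k. F k * G k) * S3 H - Mx F G H - S3 F * S3 (\<lambda>k. G k * H k)"

lemma D3_formula:
  "D3 F G H = R3 F G H + (S3 (\<lambda>k. F k * G k * H k) + S3 (\<lambda>k. F k * G k * H k))"
  by (simp add: D3_def R3_def Mx_def S3_def algebra_simps)

lemma Mx_comm:
  assumes "\<And>k l. G l * H k = e * (H k * G l)" "\<And>x. e * x = x * e"
  shows "Mx F G H = e * (S3 (\<lambda>k. F k * H k) * S3 G)"
proof -
  have t: "F k * G l * H k = e * (F k * H k * G l)" for k l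
    by (simp add: mult.assoc assms(1)) (metis assms(2) mult.assoc)
  show ?thesis unfolding Mx_def S3_def t by (simp add: algebra_simps)
qed

lemma four:
  assumes c1: "\<And>k l. G l * S k = e1 * (S k * G l)"
    and c2: "\<And>k l. H l * S k = e2 * (S k * H l)"
    and z1: "\<And>x. e1 * x = x * e1" and z2: "\<And>x. e2 * x = x * e2"
  shows "D3 F G H * S3 S = D3 F G (\<lambda>k. H k * S k) + e2 * D3 F (\<lambda>k. G k * S k) H + e1 * e2 * D3 (\<lambda>k. F k * S k) G H"
proof -
  have t0: "F k * G l * H n * S n = F k * G l * (H n * S n)" for k l n by (simp add: mult.assoc)
  have t1: "F k * G l * H n * S l = e2 * (F k * (G l * S l) * H n)" for k l n
  proof -
    have "F k * G l * H n * S l = F k * G l * (e2 * (S l * H n))" by (simp add: mult.assoc c2)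
    also have "\<dots> = e2 * (F k * (G l * S l) * H n)" by (metis z2 mult.assoc)
    finally show ?thesis .
  qed
  have t2: "F k * G l * H n * S k = e1 * e2 * (F k * S k * G l * H n)" for k l n
  proof -
    have "F k * G l * H n * S k = F k * G l * (e2 * (S k * H n))" by (simp add: mult.assoc c2)
    also have "\<dots> = e2 * (F k * (G l * S k) * H n)" by (metis z2 mult.assoc)
    also have "\<dots> = e2 * (F k * (e1 * (S k * G l)) * H n)" by (simp add: c1)
    also have "\<dots> = e1 * e2 * (F k * S k * G l * H n)" by (metis z1 mult.assoc)
    finally show ?thesis .
  qed
  show ?thesis
    unfolding D3_def S3_def
    by (simp only: distrib_left distrib_right t0 t1 t2) (simp only: add_ac)
qed

lemma sq_central_one:
  fixes e :: fsp
  assumes "\<And>k l. H l * S k = e * (S k * H l)" "e * e = 1" "\<And>x. e * x = x * e"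
  shows "S k * H l = e * (H l * S k)"
proof -
  have "e * (H l * S k) = e * (e * (S k * H l))" by (simp add: assms(1))
  also have "\<dots> = S k * H l" by (simp only: mult.assoc[symmetric] assms(2) mult_1_left)
  finally show ?thesis by simp
qed

lemma six:
  fixes e1 e2 :: fsp and F G H S :: "nat \<Rightarrow> fsp"
  assumes c1: "\<And>k l. G l * S k = e1 * (S k * G l)"
    and c2: "\<And>k l. H l * S k = e2 * (S k * H l)"
    and z1: "\<And>x. e1 * x = x * e1" and z2: "\<And>x. e2 * x = x * e2"
    and q1: "e1 * e1 = 1" and q2: "e2 * e2 = 1"
  defines "\<Delta> \<equiv> S3 (\<lambda>k. F k * G k * H k * S k)"
  shows "D3 F G H * S3 S = R3 F G (\<lambda>k. H k * S k) + e2 * R3 F (\<lambda>k. G k * S k) H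
           + e1 * e2 * R3 (\<lambda>k. F k * S k) G H + (\<Delta> + \<Delta> + \<Delta> + \<Delta> + \<Delta> + \<Delta>)"
proof -
  have sh: "S k * H k = e2 * (H k * S k)" for k by (rule sq_central_one[OF c2 q2 z2])
  have sg: "S k * G k = e1 * (G k * S k)" for k by (rule sq_central_one[OF c1 q1 z1])
  have d1: "S3 (\<lambda>k. F k * G k * (H k * S k)) = \<Delta>"
    by (simp add: \<Delta>_def mult.assoc)
  have d2: "S3 (\<lambda>k. F k * (G k * S k) * H k) = e2 * \<Delta>"
  proof -
    have "F k * (G k * S k) * H k = e2 * (F k * G k * H k * S k)" for k
    proof -
      have "F k * (G k * S k) * H k = F k * G k * (S k * H k)" by (simp add: mult.assoc)
      also have "\<dots> = F k * G k * (e2 * (H k * S k))" by (simp add: sh)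
      also have "\<dots> = e2 * (F k * G k * H k * S k)" by (metis z2 mult.assoc)
      finally show ?thesis .
    qed
    then show ?thesis by (simp add: \<Delta>_def S3_def distrib_left)
  qed
  have d3: "S3 (\<lambda>k. F k * S k * G k * H k) = e1 * e2 * \<Delta>"
  proof -
    have "F k * S k * G k * H k = e1 * e2 * (F k * G k * H k * S k)" for k
    proof -
      have "F k * S k * G k * H k = F k * (S k * G k) * H k" by (simp add: mult.assoc)
      also have "\<dots> = F k * (e1 * (G k * S k)) * H k" by (simp add: sg)
      also have "\<dots> = e1 * (F k * G k * (S k * H k))" by (metis z1 mult.assoc)
      also have "\<dots> = e1 * (F k * G k * (e2 * (H k * S k)))" by (simp add: sh)
      also have "\<dots> = e1 * e2 * (F k * G k * H k * S k)" by (metis z2 mult.assoc)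
      finally show ?thesis .
    qed
    then show ?thesis by (simp add: \<Delta>_def S3_def distrib_left)
  qed
  have "D3 F G H * S3 S = D3 F G (\<lambda>k. H k * S k) + e2 * D3 F (\<lambda>k. G k * S k) H + e1 * e2 * D3 (\<lambda>k. F k * S k) G H"
    by (rule four[OF c1 c2 z1 z2])
  also have "\<dots> = R3 F G (\<lambda>k. H k * S k) + (\<Delta> + \<Delta>) + e2 * (R3 F (\<lambda>k. G k * S k) H + (e2 * \<Delta> + e2 * \<Delta>))
      + e1 * e2 * (R3 (\<lambda>k. F k * S k) G H + (e1 * e2 * \<Delta> + e1 * e2 * \<Delta>))"
    by (simp only: D3_formula d1 d2 d3)
  also have "\<dots> = R3 F G (\<lambda>k. H k * S k) + e2 * R3 F (\<lambda>k. G k * S k) H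
           + e1 * e2 * R3 (\<lambda>k. F k * S k) G H + (\<Delta> + \<Delta> + \<Delta> + \<Delta> + \<Delta> + \<Delta>)"
  proof -
    have a: "e2 * (e2 * \<Delta>) = \<Delta>" by (simp only: mult.assoc[symmetric] q2 mult_1_left)
    have b: "e1 * e2 * (e1 * e2 * \<Delta>) = \<Delta>"
    proof -
      have "e1 * e2 * (e1 * e2 * \<Delta>) = e1 * (e2 * (e1 * (e2 * \<Delta>)))" by (simp only: mult.assoc)
      also have "e2 * (e1 * (e2 * \<Delta>)) = e1 * (e2 * (e2 * \<Delta>))" by (metis z2 mult.assoc)
      moreover have "e1 * (e1 * \<Delta>) = \<Delta>" by (simp only: mult.assoc[symmetric] q1 mult_1_left)
      ultimately show ?thesis by (simp only: a)
    qed
    show ?thesis by (simp only: distrib_left a b add_ac)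
  qed
  finally show ?thesis .
qed

definition Lc :: "rat \<Rightarrow> nat \<times> nat set \<Rightarrow> nat \<Rightarrow> fsp" where
  "Lc \<alpha> x = (\<lambda>k. C \<alpha> * L k x)"

lemma Lc_mult:
  assumes "finite (snd x)" "finite (snd y)"
  shows "Lc \<alpha> x k * Lc \<beta> y k = Lc (\<alpha> * \<beta> * bs (snd x) (snd y)) (mu x y) k"
proof -
  have "Lc \<alpha> x k * Lc \<beta> y k = C (\<alpha> * \<beta>) * (L k x * L k y)" by (simp only: Lc_def C_mult_C)
  also have "\<dots> = C (\<alpha> * \<beta>) * (C (bs (snd x) (snd y)) * L k (mu x y))" by (simp only: L_mult_same assms)
  also have "\<dots> = Lc (\<alpha> * \<beta> * bs (snd x) (snd y)) (mu x y) k"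
    by (simp only: Lc_def mult.assoc[symmetric] C_mult[symmetric])
  finally show ?thesis .
qed

lemma Lc_mult_fun:
  assumes "finite (snd x)" "finite (snd y)"
  shows "(\<lambda>k. Lc \<alpha> x k * Lc \<beta> y k) = Lc (\<alpha> * \<beta> * bs (snd x) (snd y)) (mu x y)"
  using Lc_mult[OF assms] by (simp add: fun_eq_iff)

lemma Lc_comm:
  assumes "finite (snd x)" "finite (snd y)"
  shows "Lc \<alpha> x l * Lc \<beta> y k = C (gs x y) * (Lc \<beta> y k * Lc \<alpha> x l)"
proof -
  have "Lc \<alpha> x l * Lc \<beta> y k = C (\<alpha> * \<beta>) * (L l x * L k y)" by (simp add: Lc_def C_mult_C)
  also have "\<dots> = C (\<alpha> * \<beta>) * (C (gs x y) * (L k y * L l x))"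
    using L_comm[OF assms, of l k] by (simp only:)
  also have "\<dots> = C (gs x y) * (C (\<beta> * \<alpha>) * (L k y * L l x))"
    by (simp only: C_left_commute[of "C (\<alpha> * \<beta>)"]) (simp only: mult.commute[of \<alpha> \<beta>])
  also have "\<dots> = C (gs x y) * (Lc \<beta> y k * Lc \<alpha> x l)"
    by (simp only: Lc_def C_mult_C)
  finally show ?thesis .
qed

lemma S3_Lc: "S3 (Lc \<alpha> x) = C \<alpha> * P x"
  by (simp add: S3_def Lc_def P_def distrib_left add.assoc)

lemma gs_sq: "C (gs x y) * C (gs x y) = 1"
proof -
  have "gs x y * gs x y = 1" by (simp add: gs_def flip: power_mult_distrib)
  then show ?thesis by (simp only: C_mult[symmetric] C_one)
qed

lemma R_SA:
  assumes fin: "finite (snd x)" "finite (snd y)" "finite (snd z)"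
    and P: "P x \<in> SA m" "P y \<in> SA m" "P z \<in> SA m" "P (mu x y) \<in> SA m" "P (mu x z) \<in> SA m" "P (mu y z) \<in> SA m"
  shows "R3 (Lc \<alpha> x) (Lc \<beta> y) (Lc \<gamma> z) \<in> SA m"
proof -
  have mx: "Mx (Lc \<alpha> x) (Lc \<beta> y) (Lc \<gamma> z) = C (gs y z) * (S3 (\<lambda>k. Lc \<alpha> x k * Lc \<gamma> z k) * S3 (Lc \<beta> y))"
    by (rule Mx_comm) (rule Lc_comm[OF fin(2,3)], rule C_central)
  show ?thesis
    unfolding R3_def mx Lc_mult_fun[OF fin(1,2)] Lc_mult_fun[OF fin(1,3)] Lc_mult_fun[OF fin(2,3)] S3_Lc
    by (intro SA_minus SA_mult SA_Cmult P SA_C)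
qed

lemma D3_SA:
  assumes fin: "finite (snd x)" "finite (snd y)" "finite (snd z)"
    and P: "P x \<in> SA m" "P y \<in> SA m" "P z \<in> SA m" "P (mu x y) \<in> SA m" "P (mu x z) \<in> SA m" "P (mu y z) \<in> SA m"
      "P (mu (mu x y) z) \<in> SA m"
  shows "D3 (Lc \<alpha> x) (Lc \<beta> y) (Lc \<gamma> z) \<in> SA m"
proof -
  have fxy: "finite (snd (mu x y))" using fin by (simp add: mu_def)
  have "(\<lambda>k. Lc \<alpha> x k * Lc \<beta> y k * Lc \<gamma> z k) = Lc (\<alpha> * \<beta> * bs (snd x) (snd y) * \<gamma> * bs (snd (mu x y)) (snd z)) (mu (mu x y) z)"
    by (simp add: Lc_mult fin fxy)
  then show ?thesis
    unfolding D3_formula using R_SA[OF fin P(1-6)]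
    by (simp add: S3_Lc SA_add SA_Cmult P(7))
qed

section \<open>The reduction step\<close>

definition wt :: "nat \<times> nat set \<Rightarrow> nat" where
  "wt x = fst x + card (snd x)"

lemma snd_mu[simp]: "snd (mu x y) = snd x \<union> snd y" by (simp add: mu_def)
lemma fst_mu[simp]: "fst (mu x y) = fst x + fst y" by (simp add: mu_def)

lemma wt_mu: "finite (snd x) \<Longrightarrow> finite (snd y) \<Longrightarrow> snd x \<inter> snd y = {} \<Longrightarrow> wt (mu x y) = wt x + wt y"
  by (simp add: wt_def card_Un_disjoint)

lemma bs_nz: "I \<inter> J = {} \<Longrightarrow> bs I J \<noteq> 0"
  by (simp add: bs_def)

lemma C_six: "\<Delta> + \<Delta> + \<Delta> + \<Delta> + \<Delta> + \<Delta> = C 6 * \<Delta>"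
proof -
  have "(6::rat) = 1 + 1 + 1 + 1 + 1 + 1" by simp
  then have "C 6 = C 1 + C 1 + C 1 + C 1 + C 1 + C 1" by (simp only: C_add)
  then show ?thesis by (simp only: C_one distrib_right mult_1_left)
qed

lemma SA_cancel:
  assumes "C c * a \<in> SA m" "c \<noteq> 0"
  shows "a \<in> SA m"
proof -
  have "C (1 / c) * (C c * a) = a"
    using assms(2) by (simp only: mult.assoc[symmetric] C_mult[symmetric]) (simp add: C_one)
  then show ?thesis using SA_Cmult[OF assms(1), of "1 / c"] by simp
qed

lemma step:
  fixes a b c s :: "nat \<times> nat set"
  defines "u \<equiv> mu (mu (mu a b) c) s"
  assumes fin: "finite (snd a)" "finite (snd b)" "finite (snd c)" "finite (snd s)"
    and disj: "snd a \<inter> snd b = {}" "snd a \<inter> snd c = {}" "snd a \<inter> snd s = {}"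
      "snd b \<inter> snd c = {}" "snd b \<inter> snd s = {}" "snd c \<inter> snd s = {}"
    and pos: "wt a \<ge> 1" "wt b \<ge> 1" "wt c \<ge> 1" "wt s \<ge> 1"
    and IH: "\<And>x. wt x < wt u \<Longrightarrow> snd x \<subseteq> snd u \<Longrightarrow> P x \<in> SA m"
  shows "P u \<in> SA m"
proof -
  have disj': "snd b \<inter> snd a = {}" "snd c \<inter> snd a = {}" "snd s \<inter> snd a = {}"
      "snd c \<inter> snd b = {}" "snd s \<inter> snd b = {}" "snd s \<inter> snd c = {}"
    using disj by blast+
  note ws = wt_mu fin disj disj' Int_Un_distrib Int_Un_distrib2
  have wu: "wt u = wt a + wt b + wt c + wt s" by (simp add: u_def ws)
  have Q: "P x \<in> SA m" if "wt x < wt u" "snd x \<subseteq> snd u" for x using IH that .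
  have Pa: "P a \<in> SA m" by (rule Q) (use pos wu in \<open>auto simp: u_def\<close>)
  have Pb: "P b \<in> SA m" by (rule Q) (use pos wu in \<open>auto simp: u_def\<close>)
  have Pc: "P c \<in> SA m" by (rule Q) (use pos wu in \<open>auto simp: u_def\<close>)
  have Ps: "P s \<in> SA m" by (rule Q) (use pos wu in \<open>auto simp: u_def\<close>)
  have Pab: "P (mu a b) \<in> SA m" by (rule Q) (use pos wu in \<open>auto simp: u_def ws\<close>)
  have Pac: "P (mu a c) \<in> SA m" by (rule Q) (use pos wu in \<open>auto simp: u_def ws\<close>)
  have Pbc: "P (mu b c) \<in> SA m" by (rule Q) (use pos wu in \<open>auto simp: u_def ws\<close>)
  have Pabc: "P (mu (mu a b) c) \<in> SA m" by (rule Q) (use pos wu in \<open>auto simp: u_def ws\<close>)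
  have Pcs: "P (mu c s) \<in> SA m" by (rule Q) (use pos wu in \<open>auto simp: u_def ws\<close>)
  have Pacs: "P (mu a (mu c s)) \<in> SA m" by (rule Q) (use pos wu in \<open>auto simp: u_def ws\<close>)
  have Pbcs: "P (mu b (mu c s)) \<in> SA m" by (rule Q) (use pos wu in \<open>auto simp: u_def ws\<close>)
  have Pbs: "P (mu b s) \<in> SA m" by (rule Q) (use pos wu in \<open>auto simp: u_def ws\<close>)
  have Pabs: "P (mu a (mu b s)) \<in> SA m" by (rule Q) (use pos wu in \<open>auto simp: u_def ws\<close>)
  have Pbsc: "P (mu (mu b s) c) \<in> SA m" by (rule Q) (use pos wu in \<open>auto simp: u_def ws\<close>)
  have Pas: "P (mu a s) \<in> SA m" by (rule Q) (use pos wu in \<open>auto simp: u_def ws\<close>)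
  have Pasb: "P (mu (mu a s) b) \<in> SA m" by (rule Q) (use pos wu in \<open>auto simp: u_def ws\<close>)
  have Pasc: "P (mu (mu a s) c) \<in> SA m" by (rule Q) (use pos wu in \<open>auto simp: u_def ws\<close>)
  define F where "F = Lc 1 a"
  define G where "G = Lc 1 b"
  define H where "H = Lc 1 c"
  define S where "S = Lc 1 s"
  define e1 where "e1 = C (gs b s)"
  define e2 where "e2 = C (gs c s)"
  define \<Delta> where "\<Delta> = S3 (\<lambda>k. F k * G k * H k * S k)"
  have fcs: "finite (snd (mu c s))" "finite (snd (mu b s))" "finite (snd (mu a s))"
    using fin by simp_all
  have sx: "D3 F G H * S3 S = R3 F G (\<lambda>k. H k * S k) + e2 * R3 F (\<lambda>k. G k * S k) H
           + e1 * e2 * R3 (\<lambda>k. F k * S k) G H + (\<Delta> + \<Delta> + \<Delta> + \<Delta> + \<Delta> + \<Delta>)"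
  proof -
    have c1: "\<And>k l. G l * S k = e1 * (S k * G l)"
      unfolding G_def S_def e1_def by (rule Lc_comm[OF fin(2,4)])
    have c2: "\<And>k l. H l * S k = e2 * (S k * H l)"
      unfolding H_def S_def e2_def by (rule Lc_comm[OF fin(3,4)])
    have z1: "\<And>x. e1 * x = x * e1" unfolding e1_def by (rule C_central)
    have z2: "\<And>x. e2 * x = x * e2" unfolding e2_def by (rule C_central)
    have q1: "e1 * e1 = 1" unfolding e1_def by (rule gs_sq)
    have q2: "e2 * e2 = 1" unfolding e2_def by (rule gs_sq)
    show ?thesis unfolding \<Delta>_def by (rule six[OF c1 c2 z1 z2 q1 q2])
  qed
  have hs: "(\<lambda>k. H k * S k) = Lc (1 * 1 * bs (snd c) (snd s)) (mu c s)"
    unfolding H_def S_def by (rule Lc_mult_fun[OF fin(3,4)])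
  have gs': "(\<lambda>k. G k * S k) = Lc (1 * 1 * bs (snd b) (snd s)) (mu b s)"
    unfolding G_def S_def by (rule Lc_mult_fun[OF fin(2,4)])
  have fs: "(\<lambda>k. F k * S k) = Lc (1 * 1 * bs (snd a) (snd s)) (mu a s)"
    unfolding F_def S_def by (rule Lc_mult_fun[OF fin(1,4)])
  have r1: "R3 F G (\<lambda>k. H k * S k) \<in> SA m"
    unfolding hs F_def G_def by (rule R_SA) (use fin fcs Pa Pb Pcs Pab Pacs Pbcs in auto)
  have r2: "R3 F (\<lambda>k. G k * S k) H \<in> SA m"
    unfolding gs' F_def H_def by (rule R_SA) (use fin fcs Pa Pbs Pc Pabs Pac Pbsc in auto)
  have r3: "R3 (\<lambda>k. F k * S k) G H \<in> SA m"
    unfolding fs G_def H_def by (rule R_SA) (use fin fcs Pas Pb Pc Pasb Pasc Pbc in auto)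
  have d: "D3 F G H \<in> SA m"
    unfolding F_def G_def H_def by (rule D3_SA) (use fin Pa Pb Pc Pab Pac Pbc Pabc in auto)
  have ss: "S3 S \<in> SA m" unfolding S_def S3_Lc by (rule SA_Cmult[OF Ps])
  have "\<Delta> + \<Delta> + \<Delta> + \<Delta> + \<Delta> + \<Delta> = D3 F G H * S3 S - R3 F G (\<lambda>k. H k * S k) - e2 * R3 F (\<lambda>k. G k * S k) H
           - e1 * e2 * R3 (\<lambda>k. F k * S k) G H"
    unfolding sx by (simp add: algebra_simps)
  also have "\<dots> \<in> SA m"
    by (intro SA_minus SA_mult d ss r1 r2 r3) (simp_all add: e1_def e2_def SA_C)
  finally have six_in: "C 6 * \<Delta> \<in> SA m" by (simp only: C_six)
  define g where "g = 1 * 1 * bs (snd a) (snd b) * 1 * bs (snd (mu a b)) (snd c) * 1 * bs (snd (mu (mu a b) c)) (snd s)"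
  have "(\<lambda>k. F k * G k * H k * S k) = Lc g u"
    unfolding F_def G_def H_def S_def g_def u_def by (simp add: Lc_mult fin)
  then have "\<Delta> = C g * P u" by (simp add: \<Delta>_def S3_Lc)
  then have "C (6 * g) * P u \<in> SA m" using six_in by (simp add: C_mult mult.assoc)
  moreover have "6 * g \<noteq> 0"
    unfolding g_def using disj by (simp add: bs_nz Int_Un_distrib2)
  ultimately show ?thesis by (rule SA_cancel)
qed

lemma GEN: "snd u \<subseteq> {1..m} \<Longrightarrow> P u \<in> SA m"
proof (induction "wt u" arbitrary: u rule: less_induct)
  case less
  obtain d I where u: "u = (d, I)" by (cases u)
  have Im: "I \<subseteq> {1..m}" using less.prems u by simp
  have fI: "finite I" using Im by (rule finite_subset) simp
  have IH: "\<And>x. wt x < wt u \<Longrightarrow> snd x \<subseteq> snd u \<Longrightarrow> P x \<in> SA m"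
  proof -
    fix x assume "wt x < wt u" "snd x \<subseteq> snd u"
    then show "P x \<in> SA m" using less.hyps[of x] less.prems by blast
  qed
  consider "d \<le> 5 \<and> card I \<le> 3" | "card I \<ge> 4" | "d \<ge> 6" by linarith
  then show ?case
  proof cases
    case 1
    then show ?thesis using SA_P_gen Im u by simp
  next
    case 2
    have "I \<noteq> {}" using 2 by auto
    then obtain i1 where i1: "i1 \<in> I" by blast
    have c1: "card (I - {i1}) \<ge> 3" using 2 i1 fI by simp
    have "I - {i1} \<noteq> {}"
    proof
      assume h: "I - {i1} = {}"
      have "card (I - {i1}) = 0" by (simp only: h card.empty)
      then show False using c1 by simp
    qed
    then obtain i2 where i2: "i2 \<in> I - {i1}" by blast
    have c2: "card (I - {i1} - {i2}) \<ge> 2" using c1 i2 fI by simp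
    have "I - {i1} - {i2} \<noteq> {}"
    proof
      assume h: "I - {i1} - {i2} = {}"
      have "card (I - {i1} - {i2}) = 0" by (simp only: h card.empty)
      then show False using c2 by simp
    qed
    then obtain i3 where i3: "i3 \<in> I - {i1} - {i2}" by blast
    define J where "J = I - {i1} - {i2} - {i3}"
    have c3: "card J \<ge> 1" using c2 i3 fI by (simp add: J_def)
    have fJ: "finite J" using fI by (simp add: J_def)
    define a where "a = ((0::nat), {i1})"
    define b where "b = ((0::nat), {i2})"
    define c where "c = ((0::nat), {i3})"
    define s where "s = (d, J)"
    have uu: "mu (mu (mu a b) c) s = u"
      using i1 i2 i3 by (auto simp: u mu_def J_def a_def b_def c_def s_def)
    have "P (mu (mu (mu a b) c) s) \<in> SA m"
    proof (rule step)
      show "finite (snd a)" "finite (snd b)" "finite (snd c)" "finite (snd s)"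
        using fJ by (simp_all add: a_def b_def c_def s_def)
      show "snd a \<inter> snd b = {}" "snd a \<inter> snd c = {}" "snd a \<inter> snd s = {}"
        "snd b \<inter> snd c = {}" "snd b \<inter> snd s = {}" "snd c \<inter> snd s = {}"
        using i2 i3 by (auto simp: a_def b_def c_def s_def J_def)
      show "wt a \<ge> 1" "wt b \<ge> 1" "wt c \<ge> 1" "wt s \<ge> 1"
        using c3 by (simp_all add: a_def b_def c_def s_def wt_def)
      show "\<And>x. wt x < wt (mu (mu (mu a b) c) s) \<Longrightarrow> snd x \<subseteq> snd (mu (mu (mu a b) c) s) \<Longrightarrow> P x \<in> SA m"
        unfolding uu by (rule IH)
    qed
    then show ?thesis by (simp only: uu)
  next
    case 3
    define a where "a = ((1::nat), ({}::nat set))"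
    define s where "s = (d - 3, I)"
    have uu: "mu (mu (mu a a) a) s = u"
      using 3 by (simp add: u mu_def a_def s_def)
    have "P (mu (mu (mu a a) a) s) \<in> SA m"
    proof (rule step)
      show "finite (snd a)" "finite (snd a)" "finite (snd a)" "finite (snd s)"
        using fI by (simp_all add: a_def s_def)
      show "snd a \<inter> snd a = {}" "snd a \<inter> snd a = {}" "snd a \<inter> snd s = {}"
        "snd a \<inter> snd a = {}" "snd a \<inter> snd s = {}" "snd a \<inter> snd s = {}"
        by (simp_all add: a_def)
      show "wt a \<ge> 1" "wt a \<ge> 1" "wt a \<ge> 1" "wt s \<ge> 1"
        using 3 by (simp_all add: a_def s_def wt_def)
      show "\<And>x. wt x < wt (mu (mu (mu a a) a) s) \<Longrightarrow> snd x \<subseteq> snd (mu (mu (mu a a) a) s) \<Longrightarrow> P x \<in> SA m"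
        unfolding uu by (rule IH)
    qed
    then show ?thesis by (simp only: uu)
  qed
qed

definition pf :: "nat \<times> nat \<times> nat \<Rightarrow> nat \<Rightarrow> nat" where
  "pf t = (\<lambda>i. if i = 0 then fst t else if i = 1 then fst (snd t) else if i = 2 then snd (snd t) else i)"

definition T6 :: "(nat \<times> nat \<times> nat) set" where
  "T6 = {(0,1,2),(0,2,1),(1,0,2),(1,2,0),(2,0,1),(2,1,0)}"

lemma pf_permutes:
  assumes "t \<in> T6"
  shows "pf t permutes {0,1,2}"
proof (rule bij_imp_permutes)
  show "bij_betw (pf t) {0, 1, 2} {0, 1, 2}"
    using assms by (auto simp: T6_def pf_def bij_betw_def inj_on_def)
  show "\<And>x. x \<notin> {0, 1, 2} \<Longrightarrow> pf t x = x" by (auto simp: pf_def)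
qed

lemma perm_sum:
  fixes f :: "nat \<Rightarrow> nat \<Rightarrow> nat \<Rightarrow> 'a::comm_monoid_add"
  shows "(\<Sum>\<sigma>\<in>{\<sigma>. \<sigma> permutes {0::nat,1,2}}. f (\<sigma> 0) (\<sigma> 1) (\<sigma> 2))
       = f 0 1 2 + f 0 2 1 + f 1 0 2 + f 1 2 0 + f 2 0 1 + f 2 1 0"
proof -
  define h where "h = (\<lambda>\<sigma>::nat \<Rightarrow> nat. (\<sigma> 0, \<sigma> 1, \<sigma> 2))"
  have bij: "bij_betw h {\<sigma>. \<sigma> permutes {0::nat,1,2}} T6"
    unfolding bij_betw_def
  proof
    show "inj_on h {\<sigma>. \<sigma> permutes {0::nat,1,2}}"
    proof (rule inj_onI)
      fix \<sigma> \<tau> :: "nat \<Rightarrow> nat"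
      assume s: "\<sigma> \<in> {\<sigma>. \<sigma> permutes {0::nat,1,2}}" and t: "\<tau> \<in> {\<sigma>. \<sigma> permutes {0::nat,1,2}}"
        and e: "h \<sigma> = h \<tau>"
      show "\<sigma> = \<tau>"
      proof
        fix x :: nat
        show "\<sigma> x = \<tau> x"
        proof (cases "x \<in> {0,1,2}")
          case True
          then show ?thesis using e by (auto simp: h_def)
        next
          case False
          then show ?thesis using s t by (simp add: permutes_not_in)
        qed
      qed
    qed
    show "h ` {\<sigma>. \<sigma> permutes {0::nat,1,2}} = T6"
    proof
      show "h ` {\<sigma>. \<sigma> permutes {0::nat,1,2}} \<subseteq> T6"
      proof
        fix t assume "t \<in> h ` {\<sigma>. \<sigma> permutes {0::nat,1,2}}"
        then obtain \<sigma> where "\<sigma> permutes {0::nat,1,2}" "t = h \<sigma>" by blast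
        then show "t \<in> T6" using perm3[of \<sigma>] by (simp add: h_def T6_def)
      qed
      show "T6 \<subseteq> h ` {\<sigma>. \<sigma> permutes {0::nat,1,2}}"
      proof
        fix t assume t: "t \<in> T6"
        have "h (pf t) = t" using t by (auto simp: h_def pf_def T6_def)
        then show "t \<in> h ` {\<sigma>. \<sigma> permutes {0::nat,1,2}}"
          using pf_permutes[OF t] by (auto intro: image_eqI[where x="pf t"])
      qed
    qed
  qed
  have "(\<Sum>\<sigma>\<in>{\<sigma>. \<sigma> permutes {0::nat,1,2}}. f (\<sigma> 0) (\<sigma> 1) (\<sigma> 2))
      = (\<Sum>t\<in>T6. f (fst t) (fst (snd t)) (snd (snd t)))"
  proof -
    have "(\<Sum>\<sigma>\<in>{\<sigma>. \<sigma> permutes {0::nat,1,2}}. f (\<sigma> 0) (\<sigma> 1) (\<sigma> 2))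
       = (\<Sum>\<sigma>\<in>{\<sigma>. \<sigma> permutes {0::nat,1,2}}. (\<lambda>t. f (fst t) (fst (snd t)) (snd (snd t))) (h \<sigma>))"
      by (simp add: h_def)
    also have "\<dots> = (\<Sum>t\<in>T6. f (fst t) (fst (snd t)) (snd (snd t)))"
      by (rule sum.reindex_bij_betw[OF bij])
    finally show ?thesis .
  qed
  also have "\<dots> = f 0 1 2 + f 0 2 1 + f 1 0 2 + f 1 2 0 + f 2 0 1 + f 2 1 0"
    by (simp add: T6_def add.assoc)
  finally show ?thesis .
qed

lemma card_P3: "card {\<sigma>. \<sigma> permutes {0::nat,1,2}} = 6"
proof -
  have "card {0::nat,1,2} = 3" by simp
  then have "card {\<sigma>. \<sigma> permutes {0::nat,1,2}} = fact 3" by (rule card_permutations) simp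
  then show ?thesis by (simp add: fact_numeral)
qed

section \<open>Orbit sums of monomials\<close>

lemma B_decomp:
  assumes g: "good m p" and fp: "finite (snd p)"
  defines "u \<equiv> \<lambda>k. (fst p k, {j. (j,k) \<in> snd p})"
  shows "\<exists>\<eta>. \<eta> \<noteq> 0 \<and> L 0 (u 0) * L 1 (u 1) * L 2 (u 2) = C \<eta> * B p"
proof -
  have fu: "finite (snd (u k))" for k
  proof -
    have "snd (u k) \<subseteq> fst ` snd p" by (force simp: u_def)
    then show ?thesis using fp by (meson finite_imageI finite_subset)
  qed
  have sk: "{j. (j,k) \<in> snd p} \<times> {k} = {x \<in> snd p. snd x = k}" for k by auto
  have L: "L k (u k) = B (dl k (fst p k), {x \<in> snd p. snd x = k})" for k
    using L_B[OF fu[of k], of k "fst p k"] by (simp add: u_def sk)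
  have f1: "finite {x \<in> snd p. snd x = k}" for k using fp by simp
  define S0 where "S0 = {x \<in> snd p. snd x = 0}"
  define S1 where "S1 = {x \<in> snd p. snd x = 1}"
  define S2 where "S2 = {x \<in> snd p. snd x = 2}"
  have d01: "S0 \<inter> S1 = {}" and d2: "(S0 \<union> S1) \<inter> S2 = {}" by (auto simp: S0_def S1_def S2_def)
  have fS: "finite S0" "finite S1" "finite S2" by (simp_all add: S0_def S1_def S2_def f1)
  have e: "(\<lambda>k. dl 0 (fst p 0) k + dl 1 (fst p 1) k + dl 2 (fst p 2) k) = fst p"
  proof
    fix k show "dl 0 (fst p 0) k + dl 1 (fst p 1) k + dl 2 (fst p 2) k = fst p k"
      using g by (cases "k < 3") (auto simp: dl_def good_def less_Suc_eq numeral_3_eq_3)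
  qed
  have s: "S0 \<union> S1 \<union> S2 = snd p"
    using g by (auto simp: S0_def S1_def S2_def good_def)
  have "L 0 (u 0) * L 1 (u 1) * L 2 (u 2) = B (dl 0 (fst p 0), S0) * B (dl 1 (fst p 1), S1) * B (dl 2 (fst p 2), S2)"
    by (simp add: L S0_def S1_def S2_def)
  also have "\<dots> = C (mono_sign S0 S1) * B (\<lambda>k. dl 0 (fst p 0) k + dl 1 (fst p 1) k, S0 \<union> S1) * B (dl 2 (fst p 2), S2)"
    using fS d01 by (simp add: B_mult mc_def mp_def)
  also have "\<dots> = C (mono_sign S0 S1) * (C (mono_sign (S0 \<union> S1) S2) * B p)"
    using fS d2 e s by (simp add: B_mult mc_def mp_def mult.assoc)
  also have "\<dots> = C (mono_sign S0 S1 * mono_sign (S0 \<union> S1) S2) * B p"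
    by (simp only: mult.assoc[symmetric] C_mult)
  finally show ?thesis by (intro exI[of _ "mono_sign S0 S1 * mono_sign (S0 \<union> S1) S2"]) (simp add: mono_sign_def)
qed

lemma orbit_SA:
  assumes g: "good m p" and fp: "finite (snd p)"
  shows "(\<Sum>\<sigma>\<in>{\<sigma>. \<sigma> permutes {0::nat,1,2}}. AMf \<sigma> p) \<in> SA m"
proof -
  define u where "u = (\<lambda>k. (fst p k, {j. (j,k) \<in> snd p}))"
  obtain \<eta> where \<eta>: "\<eta> \<noteq> 0" "L 0 (u 0) * L 1 (u 1) * L 2 (u 2) = C \<eta> * B p"
    using B_decomp[OF g fp] unfolding u_def by blast
  have Bp: "B p = C (1 / \<eta>) * (L 0 (u 0) * L 1 (u 1) * L 2 (u 2))"
    using \<eta> by (simp add: mult.assoc[symmetric] C_mult[symmetric] C_one)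
  have um: "snd (u k) \<subseteq> {1..m}" for k using g by (auto simp: u_def good_def)
  have fu: "finite (snd (u k))" for k using um[of k] by (rule finite_subset) simp
  have A: "AMf \<sigma> p = C (1 / \<eta>) * (L (\<sigma> 0) (u 0) * L (\<sigma> 1) (u 1) * L (\<sigma> 2) (u 2))"
    if "\<sigma> permutes {0::nat,1,2}" for \<sigma>
  proof -
    have inj: "inj \<sigma>" using that by (rule permutes_inj)
    have "AMf \<sigma> p = actf \<sigma> (B p)" by (simp add: actf_B fp)
    also have "\<dots> = C (1 / \<eta>) * (L (\<sigma> 0) (u 0) * L (\<sigma> 1) (u 1) * L (\<sigma> 2) (u 2))"
      by (simp add: Bp actf_mult inj actf_C actf_L)
    finally show ?thesis .
  qed
  have "(\<Sum>\<sigma>\<in>{\<sigma>. \<sigma> permutes {0::nat,1,2}}. AMf \<sigma> p)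
      = (\<Sum>\<sigma>\<in>{\<sigma>. \<sigma> permutes {0::nat,1,2}}. C (1 / \<eta>) * (L (\<sigma> 0) (u 0) * L (\<sigma> 1) (u 1) * L (\<sigma> 2) (u 2)))"
    by (rule sum.cong) (simp_all add: A)
  also have "\<dots> = C (1 / \<eta>) * D3 (Lc 1 (u 0)) (Lc 1 (u 1)) (Lc 1 (u 2))"
    unfolding perm_sum[of "\<lambda>a b c. C (1 / \<eta>) * (L a (u 0) * L b (u 1) * L c (u 2))"]
    by (simp add: D3_def Lc_def C_one distrib_left add.assoc)
  also have "\<dots> \<in> SA m"
    by (intro SA_Cmult D3_SA fu GEN) (use um[of 0] um[of 1] um[of 2] in auto)
  finally show ?thesis .
qed

section \<open>The hard direction\<close>

lemma C_of_nat: "C (of_nat n) = of_nat n"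
  by (induction n) (simp_all add: C_zero C_add C_one)

lemma C_numeral: "C (numeral n) = numeral n"
  using C_of_nat[of "numeral n"] by simp

lemma hard_direction:
  assumes f: "f \<in> Aring m" and inv: "invariant_class m f"
  shows "\<exists>g\<in>subalg (Zgens m). sp_sub f g \<in> Jideal m"
proof -
  define P3 where "P3 = {\<sigma>. \<sigma> permutes {0::nat,1,2}}"
  have fin3: "finite P3" unfolding P3_def by (rule finite_permutations) simp
  have c3: "card P3 = 6" unfolding P3_def by (rule card_P3)
  have ff: "f \<in> fspset" using f Aring_fspset by blast
  define a where "a = Abs f"
  have ra: "rep a = f" using ff by (simp add: a_def Abs_inverse)
  have goodf: "good m p" "finite (snd p)" if "p \<in> sp_supp f" for p
    using f that ra Ar_iff[of a m] supp_fin[of p a] by (auto simp: Ar_def)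
  define \<rho> where "\<rho> = (\<Sum>\<sigma>\<in>P3. C (1/6) * actf \<sigma> a)"
  have "\<rho> = (\<Sum>\<sigma>\<in>P3. \<Sum>p\<in>sp_supp f. C (1/6) * (C (f p) * AMf \<sigma> p))"
    by (simp add: \<rho>_def actf_def lin_def ra sum_distrib_left)
  also have "\<dots> = (\<Sum>p\<in>sp_supp f. C (1/6 * f p) * (\<Sum>\<sigma>\<in>P3. AMf \<sigma> p))"
    by (subst sum.swap) (intro sum.cong refl, simp add: sum_distrib_left mult.assoc[symmetric] C_mult[symmetric])
  also have "\<dots> \<in> SA m"
  proof (rule SA_sum, rule SA_Cmult)
    fix p assume "p \<in> sp_supp f"
    then show "(\<Sum>\<sigma>\<in>P3. AMf \<sigma> p) \<in> SA m" unfolding P3_def using goodf by (intro orbit_SA) auto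
  qed
  finally have \<rho>SA: "\<rho> \<in> SA m" .
  have sa: "(\<Sum>\<sigma>\<in>P3. C (1/6) * a) = a"
  proof -
    have "(\<Sum>\<sigma>\<in>P3. C (1/6) * a) = of_nat (card P3) * (C (1/6) * a)"
      by (simp add: sum_constant)
    also have "\<dots> = C 6 * C (1/6) * a" by (simp add: c3 C_numeral mult.assoc)
    also have "\<dots> = a" by (simp add: C_mult[symmetric] C_one)
    finally show ?thesis .
  qed
  have "a - \<rho> = (\<Sum>\<sigma>\<in>P3. C (1/6) * a) - (\<Sum>\<sigma>\<in>P3. C (1/6) * actf \<sigma> a)"
    by (simp only: sa \<rho>_def)
  also have "\<dots> = (\<Sum>\<sigma>\<in>P3. C (1/6) * a - C (1/6) * actf \<sigma> a)"
    by (simp only: sum_subtractf)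
  also have "\<dots> = (\<Sum>\<sigma>\<in>P3. C (1/6) * - (actf \<sigma> a - a))"
    by (intro sum.cong refl) (simp add: algebra_simps)
  also have "\<dots> \<in> Jf m"
  proof (intro Jf_sum Jf_C Jf_uminus)
    fix \<sigma> assume "\<sigma> \<in> P3"
    then have "sp_sub (act \<sigma> f) f \<in> Jideal m" using inv by (simp add: invariant_class_def P3_def)
    then show "actf \<sigma> a - a \<in> Jf m" by (simp add: Jf_def rep_minus rep_actf ra)
  qed
  finally have "a - \<rho> \<in> Jf m" .
  then have "sp_sub f (rep \<rho>) \<in> Jideal m" by (simp add: Jf_def rep_minus ra)
  moreover have "rep \<rho> \<in> subalg (Zgens m)" using \<rho>SA by (simp add: SA_def)
  ultimately show ?thesis by blast
qed

theorem lemma6p1: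
  fixes m :: nat
  assumes "1 \<le> m"
  shows "\<forall>f \<in> Aring m.
           invariant_class m f \<longleftrightarrow> (\<exists>g \<in> subalg (Zgens m). sp_sub f g \<in> Jideal m)"
proof
  fix f assume f: "f \<in> Aring m"
  show "invariant_class m f \<longleftrightarrow> (\<exists>g \<in> subalg (Zgens m). sp_sub f g \<in> Jideal m)"
  proof
    assume "invariant_class m f"
    then show "\<exists>g \<in> subalg (Zgens m). sp_sub f g \<in> Jideal m" by (rule hard_direction[OF f])
  next
    assume "\<exists>g \<in> subalg (Zgens m). sp_sub f g \<in> Jideal m"
    then obtain g where "g \<in> subalg (Zgens m)" "sp_sub f g \<in> Jideal m" by blast
    then show "invariant_class m f" by (rule easy_direction[OF f])
  qed
qed

end
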